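(* Let $n\in\{2,\dots,r\}$, $\sigma\in\mathcal{S}_n$ and $\alpha\in\mathcal{J}_n:=\bigcup_{m=\lceil n/2\rceil}^n\mathcal{J}_n^m$. Then the series defining $\hat F_n^{\sigma,\alpha}$ converges and $\hat F_n^{\sigma,\alpha}:\mathfrak{g}_{CM}^{\otimes p_\alpha}\to\mathfrak{g}_{CM}$ is Hilbert–Schmidt.
   Context: $\mathfrak{g}_{CM}$ is a real separable Hilbert space with a Lie bracket nilpotent of step $r$ (iterated brackets of more than $r$ elements vanish) which is Hilbert–Schmidt ($\sum_{i,j}\|[e_i,e_j]\|^2<\infty$ for an orthonormal basis). Define $F_n(k_1\otimes\cdots\otimes k_n)=[[\cdots[k_1,k_2],\cdots],k_n]$ and $F_n^\sigma(k_1\otimes\cdots\otimes k_n)=F_n(k_{\sigma(1)}\otimes\cdots\otimes k_{\sigma(n)})$ for $\sigma$ in the symmetric group $\mathcal{S}_n$. $\mathcal{J}_n^m=\{\alpha\in\{1,2\}^m:\sum_i\alpha_i=n\}$, $p_\alpha=\#\{i:\alpha_i=1\}$, $q_\alpha=\#\{i:\alpha_i=2\}$. With $\{h_j\}$ an orthonormal basis of $\mathfrak{g}_{CM}$, $\hat F_n^{\sigma,\alpha}(k_1\otimes\cdots\otimes k_{p_\alpha})=\sum_{j_1,\dots,j_{q_\alpha}=1}^\infty F_n^\sigma(X_1\otimes\cdots\otimes X_m)$, where, reading $\alpha$ from left to right, $X_i$ is the next unused $k$ (starting with $k_1$) if $\alpha_i=1$, and $X_i=h_{j_l}\otimes h_{j_l}$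 if $\alpha_i=2$ and $\alpha_i$ is the $l$-th entry of $\alpha$ equal to $2$. *)

theory Defs
  imports "HOL-Analysis.Analysis"
begin

definition orthonormal_basis :: "'a::real_inner set \<Rightarrow> bool" where
  "orthonormal_basis B \<longleftrightarrow> (\<forall>x\<in>B. norm x = 1) \<and> pairwise orthogonal B \<and> closure (span B) = UNIV"

text \<open>Left-normed iterated bracket F_n(k_1,...,k_n) = [[...[k_1,k_2],...],k_n];
  elementary tensors k_1 \<otimes> ... \<otimes> k_n are represented by the list [k_1,...,k_n].\<close>
definition iter_bracket :: "('a \<Rightarrow> 'a \<Rightarrow> 'a) \<Rightarrow> 'a list \<Rightarrow> 'a" where
  "iter_bracket br xs = foldl br (hd xs) (tl xs)"

text \<open>F_n^sigma(k_1,...,k_n) = F_n(k_{sigma(1)},...,k_{sigma(n)}); indices are 0-based, sigma permutes {0..<n}.\<close>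
definition perm_bracket :: "('a \<Rightarrow> 'a \<Rightarrow> 'a) \<Rightarrow> nat \<Rightarrow> (nat \<Rightarrow> nat) \<Rightarrow> 'a list \<Rightarrow> 'a" where
  "perm_bracket br n \<sigma> xs = iter_bracket br (map (\<lambda>i. xs ! \<sigma> i) [0..<n])"

definition hs_nilpotent_lie :: "'a::{real_inner,complete_space} set \<Rightarrow> ('a \<Rightarrow> 'a \<Rightarrow> 'a) \<Rightarrow> nat \<Rightarrow> bool" where
  "hs_nilpotent_lie B br r \<longleftrightarrow>
     bounded_bilinear br \<and>
     (\<forall>x y. br x y = - br y x) \<and>
     (\<forall>x y z. br x (br y z) + br y (br z x) + br z (br x y) = 0) \<and>
     (\<forall>xs. length xs > r \<longrightarrow> iter_bracket br xs = 0) \<and>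
     (\<lambda>(x, y). (norm (br x y))\<^sup>2) summable_on (B \<times> B)"

definition J :: "nat \<Rightarrow> nat \<Rightarrow> nat list set" where
  "J n m = {\<alpha>. length \<alpha> = m \<and> set \<alpha> \<subseteq> {1,2} \<and> sum_list \<alpha> = n}"

definition Jn :: "nat \<Rightarrow> nat list set" where
  "Jn n = (\<Union>m\<in>{nat \<lceil>real n / 2\<rceil>..n}. J n m)"

definition p_of :: "nat list \<Rightarrow> nat" where "p_of \<alpha> = length (filter (\<lambda>a. a = 1) \<alpha>)"
definition q_of :: "nat list \<Rightarrow> nat" where "q_of \<alpha> = length (filter (\<lambda>a. a = 2) \<alpha>)"

text \<open>Reading alpha left to right: an entry 1 consumes the next k, an entry 2 inserts h_j \<otimes> h_j
  for the next summation index j.\<close>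
fun interleave :: "nat list \<Rightarrow> 'a list \<Rightarrow> 'a list \<Rightarrow> 'a list" where
  "interleave [] ks hs = []"
| "interleave (a # as) ks hs =
     (if a = 1 then hd ks # interleave as (tl ks) hs
      else hd hs # hd hs # interleave as ks (tl hs))"

definition tuples :: "'a set \<Rightarrow> nat \<Rightarrow> 'a list set" where
  "tuples B q = {hs. length hs = q \<and> set hs \<subseteq> B}"

definition Fhat_term :: "('a \<Rightarrow> 'a \<Rightarrow> 'a) \<Rightarrow> nat \<Rightarrow> (nat \<Rightarrow> nat) \<Rightarrow> nat list \<Rightarrow> 'a list \<Rightarrow> 'a list \<Rightarrow> 'a" where
  "Fhat_term br n \<sigma> \<alpha> ks hs = perm_bracket br n \<sigma> (interleave \<alpha> ks hs)"

definition Fhat :: "'a::{real_normed_vector} set \<Rightarrow> ('a \<Rightarrow> 'a \<Rightarrow> 'a) \<Rightarrow> nat \<Rightarrow> (nat \<Rightarrow> nat) \<Rightarrow> nat list \<Rightarrow> 'a list \<Rightarrow> 'a" where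
  "Fhat B br n \<sigma> \<alpha> ks = infsum (Fhat_term br n \<sigma> \<alpha> ks) (tuples B (q_of \<alpha>))"

text \<open>A map T defined on elementary tensors of H^{\<otimes>p} (lists of length p) is Hilbert-Schmidt:
  it is multilinear and bounded (so extends to a bounded operator on the Hilbert tensor product)
  and the sum of squared norms over the product orthonormal basis is finite.\<close>
definition hilbert_schmidt_multi :: "'a::real_normed_vector set \<Rightarrow> nat \<Rightarrow> ('a list \<Rightarrow> 'b::real_normed_vector) \<Rightarrow> bool" where
  "hilbert_schmidt_multi B p T \<longleftrightarrow>
     (\<forall>ks i. length ks = p \<and> i < p \<longrightarrow> linear (\<lambda>x. T (ks[i := x]))) \<and>
     (\<exists>C. \<forall>ks. length ks = p \<longrightarrow> norm (T ks) \<le> C * prod_list (map norm ks)) \<and>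
     (\<lambda>es. (norm (T es))\<^sup>2) summable_on tuples B p"

end

theory Submission
  imports Defs
begin


lemma has_sum_times_prod:
  fixes f g :: "_ \<Rightarrow> real"
  assumes "(f has_sum a) A" "(g has_sum b) B"
    and "\<And>x. x \<in> A \<Longrightarrow> f x \<ge> 0" "\<And>y. y \<in> B \<Longrightarrow> g y \<ge> 0"
  shows "((\<lambda>(x,y). f x * g y) has_sum (a * b)) (A \<times> B)"
proof -
  have inner: "\<And>x. x \<in> A \<Longrightarrow> ((\<lambda>y. (\<lambda>(x,y). f x * g y) (x, y)) has_sum f x * b) B"
    using assms(2) by (simp add: has_sum_cmult_right)
  have outer: "((\<lambda>x. f x * b) has_sum a * b) A"
    using assms(1) by (simp add: has_sum_cmult_left)
  have sm: "(\<lambda>(x,y). f x * g y) summable_on Sigma A (\<lambda>_. B)"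
    by (rule summable_on_SigmaI[OF inner]) (use outer assms(3,4) in \<open>auto simp: has_sum_imp_summable\<close>)
  show ?thesis
    using has_sum_SigmaI[OF inner outer sm] by simp
qed


lemma has_sum_prod_PiE:
  fixes f :: "'i \<Rightarrow> 'b \<Rightarrow> real"
  assumes "finite I" "\<And>i. i \<in> I \<Longrightarrow> (f i has_sum s i) (B i)"
    and "\<And>i y. i \<in> I \<Longrightarrow> y \<in> B i \<Longrightarrow> f i y \<ge> 0"
  shows "((\<lambda>g. \<Prod>i\<in>I. f i (g i)) has_sum (\<Prod>i\<in>I. s i)) (PiE I B)"
  using assms
proof (induction I rule: finite_induct)
  case empty
  then show ?case by (simp add: has_sum_finiteI)
next
  case (insert x A)
  have pi: "PiE (insert x A) B = (\<lambda>(g,y). g(x:=y)) ` (PiE A B \<times> B x)"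
    unfolding PiE_insert_eq
    by (subst swap_product [symmetric]) (simp add: image_image case_prod_unfold)
  have inj: "inj_on (\<lambda>(g, y). g(x := y)) (PiE A B \<times> B x)"
    using \<open>x \<notin> A\<close> by (rule inj_combinator')
  have IH: "((\<lambda>g. \<Prod>i\<in>A. f i (g i)) has_sum (\<Prod>i\<in>A. s i)) (PiE A B)"
    using insert by auto
  have fx: "(f x has_sum s x) (B x)" using insert by auto
  have pr: "((\<lambda>(g,y). (\<Prod>i\<in>A. f i (g i)) * f x y) has_sum ((\<Prod>i\<in>A. s i) * s x)) (PiE A B \<times> B x)"
    by (rule has_sum_times_prod[OF IH fx]) (use insert.prems in \<open>auto intro!: prod_nonneg simp: PiE_iff\<close>)
  have eq: "((\<lambda>g. \<Prod>i\<in>insert x A. f i (g i)) \<circ> (\<lambda>(g,y). g(x:=y))) = (\<lambda>(g,y). (\<Prod>i\<in>A. f i (g i)) * f x y)"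
  proof -
    have "(\<Prod>z\<in>A. f z ((g(x := y)) z)) = (\<Prod>z\<in>A. f z (g z))" for g y
      using insert.hyps by (intro prod.cong) auto
    thus ?thesis using insert.hyps by (auto simp: fun_eq_iff mult.commute)
  qed
  show ?case
    unfolding pi has_sum_reindex[OF inj] eq using pr insert.hyps by (simp add: mult.commute)
qed


lemma bij_tuples: "bij_betw (\<lambda>g. map g [0..<q]) (PiE {..<q} (\<lambda>_. B)) (tuples B q)"
proof (rule bij_betwI[where g = "\<lambda>hs. restrict (\<lambda>j. hs ! j) {..<q}"])
  show "(\<lambda>g. map g [0..<q]) \<in> PiE {..<q} (\<lambda>_. B) \<rightarrow> tuples B q"
  proof
    fix g assume g: "g \<in> PiE {..<q} (\<lambda>_. B)"
    have "set (map g [0..<q]) \<subseteq> B" using g by (force simp: PiE_iff)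
    thus "map g [0..<q] \<in> tuples B q" unfolding tuples_def by simp
  qed
  show "(\<lambda>hs. restrict (\<lambda>j. hs ! j) {..<q}) \<in> tuples B q \<rightarrow> PiE {..<q} (\<lambda>_. B)"
  proof
    fix hs assume "hs \<in> tuples B q"
    hence "length hs = q" "set hs \<subseteq> B" unfolding tuples_def by auto
    thus "restrict (\<lambda>j. hs ! j) {..<q} \<in> PiE {..<q} (\<lambda>_. B)" by (auto simp: PiE_iff)
  qed
  show "restrict (\<lambda>j. map g [0..<q] ! j) {..<q} = g" if "g \<in> PiE {..<q} (\<lambda>_. B)" for g
  proof
    fix j show "restrict (\<lambda>j. map g [0..<q] ! j) {..<q} j = g j"
    proof (cases "j < q")
      case True thus ?thesis by simp
    next
      case False
      hence "g j = undefined" using PiE_arb[OF that, of j] by simp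
      thus ?thesis using False by simp
    qed
  qed
  show "map (restrict (\<lambda>j. hs ! j) {..<q}) [0..<q] = hs" if "hs \<in> tuples B q" for hs
    using that unfolding tuples_def by (intro nth_equalityI) auto
qed

lemma has_sum_tuples_prod:
  fixes f :: "nat \<Rightarrow> 'b \<Rightarrow> real"
  assumes "\<And>j. j < q \<Longrightarrow> (f j has_sum s j) B"
    and "\<And>j y. j < q \<Longrightarrow> y \<in> B \<Longrightarrow> f j y \<ge> 0"
  shows "((\<lambda>hs. \<Prod>j<q. f j (hs ! j)) has_sum (\<Prod>j<q. s j)) (tuples B q)"
proof -
  have h: "((\<lambda>g. \<Prod>j<q. f j (g j)) has_sum (\<Prod>j<q. s j)) (PiE {..<q} (\<lambda>_. B))"
    by (rule has_sum_prod_PiE) (use assms in auto)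
  define F where "F = (\<lambda>hs. \<Prod>j<q. f j (hs ! j))"
  have "((\<lambda>g. F (map g [0..<q])) has_sum (\<Prod>j<q. s j)) (PiE {..<q} (\<lambda>_. B))"
    unfolding F_def by (rule has_sum_cong[THEN iffD1, OF _ h]) (auto intro!: prod.cong)
  hence "(F has_sum (\<Prod>j<q. s j)) (tuples B q)"
    by (rule has_sum_reindex_bij_betw[OF bij_tuples, of F, THEN iffD1])
  thus ?thesis unfolding F_def .
qed


lemma has_sum_PiE_pair:
  fixes f :: "'i \<Rightarrow> 'b \<Rightarrow> real" and \<Phi> :: "'b \<times> 'b \<Rightarrow> real"
  assumes "finite I" "j0 \<in> I" "j1 \<in> I" "j0 \<noteq> j1"
    and "(\<Phi> has_sum s0) (B \<times> B)" "\<And>z. z \<in> B \<times> B \<Longrightarrow> \<Phi> z \<ge> 0"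
    and "\<And>i. i \<in> I - {j0,j1} \<Longrightarrow> (f i has_sum s i) B"
    and "\<And>i y. i \<in> I - {j0,j1} \<Longrightarrow> y \<in> B \<Longrightarrow> f i y \<ge> 0"
  shows "((\<lambda>g. \<Phi> (g j0, g j1) * (\<Prod>i\<in>I-{j0,j1}. f i (g i))) has_sum (s0 * (\<Prod>i\<in>I-{j0,j1}. s i))) (PiE I (\<lambda>_. B))"
proof -
  let ?J = "I - {j0,j1}"
  have P: "((\<lambda>g. \<Prod>i\<in>?J. f i (g i)) has_sum (\<Prod>i\<in>?J. s i)) (PiE ?J (\<lambda>_. B))"
    by (rule has_sum_prod_PiE) (use assms in auto)
  have T: "((\<lambda>(z,g). \<Phi> z * (\<Prod>i\<in>?J. f i (g i))) has_sum (s0 * (\<Prod>i\<in>?J. s i))) ((B\<times>B) \<times> PiE ?J (\<lambda>_. B))"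
  proof (rule has_sum_times_prod[OF assms(5) P])
    show "\<And>z. z \<in> B \<times> B \<Longrightarrow> 0 \<le> \<Phi> z" by (rule assms(6))
    fix g assume g: "g \<in> PiE ?J (\<lambda>_. B)"
    show "0 \<le> (\<Prod>i\<in>?J. f i (g i))"
    proof (rule prod_nonneg)
      fix i assume "i \<in> ?J" thus "0 \<le> f i (g i)" using g assms(8)[of i "g i"] by (auto simp: PiE_iff)
    qed
  qed
  define h where "h = (\<lambda>(z::'b\<times>'b, g::'i\<Rightarrow>'b). g(j0 := fst z, j1 := snd z))"
  have bij: "bij_betw h ((B\<times>B) \<times> PiE ?J (\<lambda>_. B)) (PiE I (\<lambda>_. B))"
  proof (rule bij_betwI[where g = "\<lambda>g. ((g j0, g j1), restrict g ?J)"])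
    show "h \<in> (B \<times> B) \<times> PiE ?J (\<lambda>_. B) \<rightarrow> PiE I (\<lambda>_. B)"
    proof
      fix x assume x: "x \<in> (B \<times> B) \<times> PiE ?J (\<lambda>_. B)"
      obtain a b g where xe: "x = ((a,b),g)" by (metis prod.collapse)
      have ab: "a \<in> B" "b \<in> B" and g: "g \<in> PiE ?J (\<lambda>_. B)" using x xe by auto
      have "g(j0 := a, j1 := b) \<in> PiE I (\<lambda>_. B)"
      proof (rule PiE_I)
        fix i assume "i \<in> I" thus "(g(j0 := a, j1 := b)) i \<in> B"
          using ab g by (cases "i = j0"; cases "i = j1") (auto simp: PiE_iff)
      next
        fix i assume "i \<notin> I" thus "(g(j0 := a, j1 := b)) i = undefined"
          using assms(2,3) PiE_arb[OF g, of i] by auto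
      qed
      thus "h x \<in> PiE I (\<lambda>_. B)" by (simp add: xe h_def)
    qed
    show "(\<lambda>g. ((g j0, g j1), restrict g ?J)) \<in> PiE I (\<lambda>_. B) \<rightarrow> (B \<times> B) \<times> PiE ?J (\<lambda>_. B)"
    proof
      fix g assume g: "g \<in> PiE I (\<lambda>_. B)"
      have "g j0 \<in> B" "g j1 \<in> B" using g assms(2,3) by (auto simp: PiE_iff)
      moreover have "restrict g ?J \<in> PiE ?J (\<lambda>_. B)" using g by (auto simp: PiE_iff)
      ultimately show "((g j0, g j1), restrict g ?J) \<in> (B \<times> B) \<times> PiE ?J (\<lambda>_. B)" by simp
    qed
    show "((h x j0, h x j1), restrict (h x) ?J) = x" if x: "x \<in> (B \<times> B) \<times> PiE ?J (\<lambda>_. B)" for x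
    proof -
      obtain a b g where xe: "x = ((a,b),g)" by (metis prod.collapse)
      have g: "g \<in> PiE ?J (\<lambda>_. B)" using x xe by auto
      have "restrict (g(j0 := a, j1 := b)) ?J = g"
      proof
        fix i show "restrict (g(j0 := a, j1 := b)) ?J i = g i"
        proof (cases "i \<in> ?J")
          case True thus ?thesis by simp
        next
          case False thus ?thesis using PiE_arb[OF g, of i] by simp
        qed
      qed
      thus ?thesis using assms(4) by (simp add: xe h_def)
    qed
    show "h ((y j0, y j1), restrict y ?J) = y" if y: "y \<in> PiE I (\<lambda>_. B)" for y
    proof
      fix i show "h ((y j0, y j1), restrict y ?J) i = y i"
        by (cases "i = j0"; cases "i = j1"; cases "i \<in> I") (simp_all add: h_def PiE_arb[OF y])
    qed
  qed
  have "((\<lambda>x. (\<lambda>g. \<Phi> (g j0, g j1) * (\<Prod>i\<in>?J. f i (g i))) (h x)) has_sum (s0 * (\<Prod>i\<in>?J. s i))) ((B\<times>B) \<times> PiE ?J (\<lambda>_. B))"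
  proof (rule has_sum_cong[THEN iffD1, OF _ T])
    fix x assume "x \<in> (B\<times>B) \<times> PiE ?J (\<lambda>_. B)"
    obtain z g where x: "x = (z, g)" by (metis prod.collapse)
    have "(\<Prod>i\<in>?J. f i (h x i)) = (\<Prod>i\<in>?J. f i (g i))"
      by (rule prod.cong) (auto simp: h_def x)
    thus "(case x of (z, g) \<Rightarrow> \<Phi> z * (\<Prod>i\<in>?J. f i (g i))) = \<Phi> (h x j0, h x j1) * (\<Prod>i\<in>?J. f i (h x i))"
      using assms(4) by (simp add: x h_def)
  qed
  thus ?thesis by (rule has_sum_reindex_bij_betw[OF bij, THEN iffD1])
qed

lemma has_sum_tuples_pair:
  fixes f :: "nat \<Rightarrow> 'b \<Rightarrow> real" and \<Phi> :: "'b \<times> 'b \<Rightarrow> real"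
  assumes "j0 < q" "j1 < q" "j0 \<noteq> j1"
    and "(\<Phi> has_sum s0) (B \<times> B)" "\<And>z. z \<in> B \<times> B \<Longrightarrow> \<Phi> z \<ge> 0"
    and "\<And>i. i < q \<Longrightarrow> i \<noteq> j0 \<Longrightarrow> i \<noteq> j1 \<Longrightarrow> (f i has_sum s i) B"
    and "\<And>i y. i < q \<Longrightarrow> i \<noteq> j0 \<Longrightarrow> i \<noteq> j1 \<Longrightarrow> y \<in> B \<Longrightarrow> f i y \<ge> 0"
  shows "((\<lambda>hs. \<Phi> (hs ! j0, hs ! j1) * (\<Prod>i\<in>{..<q}-{j0,j1}. f i (hs ! i))) has_sum (s0 * (\<Prod>i\<in>{..<q}-{j0,j1}. s i))) (tuples B q)"
proof -
  have h: "((\<lambda>g. \<Phi> (g j0, g j1) * (\<Prod>i\<in>{..<q}-{j0,j1}. f i (g i))) has_sum (s0 * (\<Prod>i\<in>{..<q}-{j0,j1}. s i))) (PiE {..<q} (\<lambda>_. B))"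
    by (rule has_sum_PiE_pair) (use assms in auto)
  have "((\<lambda>g. (\<lambda>hs. \<Phi> (hs ! j0, hs ! j1) * (\<Prod>i\<in>{..<q}-{j0,j1}. f i (hs ! i))) (map g [0..<q])) has_sum (s0 * (\<Prod>i\<in>{..<q}-{j0,j1}. s i))) (PiE {..<q} (\<lambda>_. B))"
    by (rule has_sum_cong[THEN iffD1, OF _ h]) (use assms in \<open>auto intro!: prod.cong\<close>)
  thus ?thesis using has_sum_reindex_bij_betw[OF bij_tuples] by blast
qed


locale hsl =
  fixes B :: "'a::{real_inner,complete_space} set" and br :: "'a \<Rightarrow> 'a \<Rightarrow> 'a" and r :: nat
  assumes onb: "orthonormal_basis B" and lie: "hs_nilpotent_lie B br r"
begin

lemma bb: "bounded_bilinear br" using lie unfolding hs_nilpotent_lie_def by blast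
lemma antisym: "br x y = - br y x" using lie unfolding hs_nilpotent_lie_def by blast
lemma br_self: "br x x = 0"
proof -
  have "br x x + br x x = 0" using antisym[of x x] by (simp only: eq_neg_iff_add_eq_0)
  hence "2 *\<^sub>R br x x = 0" by (simp add: scaleR_2)
  thus ?thesis by simp
qed
lemma norm_br_sym: "norm (br x y) = norm (br y x)" using antisym[of x y] by (simp only: norm_minus_cancel)
lemma hs: "(\<lambda>(x, y). (norm (br x y))\<^sup>2) summable_on (B \<times> B)"
  using lie unfolding hs_nilpotent_lie_def by blast
lemma B_norm: "x \<in> B \<Longrightarrow> norm x = 1" using onb by (simp add: orthonormal_basis_def)
lemma B_orth: "x \<in> B \<Longrightarrow> y \<in> B \<Longrightarrow> x \<noteq> y \<Longrightarrow> orthogonal x y"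
  using onb by (simp add: orthonormal_basis_def pairwise_def)
lemma B_dense: "closure (span B) = UNIV" using onb by (simp add: orthonormal_basis_def)

definition A2 :: "'a \<Rightarrow> real" where "A2 h = infsum (\<lambda>e. (norm (br h e))\<^sup>2) B"

lemma section_summable: "h \<in> B \<Longrightarrow> (\<lambda>e. (norm (br h e))\<^sup>2) summable_on B"
  using summable_on_SigmaD1[of "\<lambda>x y. (norm (br x y))\<^sup>2" B "\<lambda>_. B" h] hs by simp

lemma sq_sym: "(\<lambda>e. (norm (br e h))\<^sup>2) = (\<lambda>e. (norm (br h e))\<^sup>2)"
  by (intro ext arg_cong[where f="\<lambda>t. t^2"] norm_br_sym)

lemma section_summable': "h \<in> B \<Longrightarrow> (\<lambda>e. (norm (br e h))\<^sup>2) summable_on B"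
  unfolding sq_sym by (rule section_summable)

lemma A2_nonneg: "A2 h \<ge> 0" unfolding A2_def by (rule infsum_nonneg) simp

lemma A2_summable: "A2 summable_on B"
proof -
  have "(\<lambda>x. infsum (\<lambda>y. (\<lambda>(x,y). (norm (br x y))\<^sup>2) (x, y)) B) summable_on B"
    by (rule summable_on_SigmaD[of _ B "\<lambda>_. B"]) (use hs section_summable in auto)
  thus ?thesis unfolding A2_def by simp
qed

lemma A2_bound_sq:
  assumes h: "h \<in> B"
  shows "(norm (br y h))\<^sup>2 \<le> A2 h * (norm y)\<^sup>2"
proof -
  interpret bounded_bilinear br by (rule bb)
  have cl: "closed {y. (norm (br y h))\<^sup>2 \<le> A2 h * (norm y)\<^sup>2}"
  proof (rule closed_Collect_le)
    have "continuous_on UNIV (\<lambda>y. br y h)"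
      by (rule linear_continuous_on) (rule bounded_linear_left)
    thus "continuous_on UNIV (\<lambda>y. (norm (br y h))\<^sup>2)"
      by (intro continuous_intros)
    show "continuous_on UNIV (\<lambda>y. A2 h * (norm y)\<^sup>2)" by (intro continuous_intros)
  qed
  have sp: "span B \<subseteq> {y. (norm (br y h))\<^sup>2 \<le> A2 h * (norm y)\<^sup>2}"
  proof
    fix y assume "y \<in> span B"
    then obtain t c where t: "finite t" "t \<subseteq> B" and y: "y = (\<Sum>a\<in>t. c a *\<^sub>R a)"
      unfolding span_explicit by blast
    have "br y h = (\<Sum>a\<in>t. c a *\<^sub>R br a h)"
      unfolding y by (simp add: sum_left scaleR_left)
    hence "norm (br y h) \<le> (\<Sum>a\<in>t. norm (c a *\<^sub>R br a h))"
      by (simp only: norm_sum)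
    also have "\<dots> = (\<Sum>a\<in>t. \<bar>c a\<bar> * norm (br a h))"
      by (simp only: norm_scaleR)
    finally have "norm (br y h) \<le> (\<Sum>a\<in>t. \<bar>c a\<bar> * norm (br a h))" .
    hence "(norm (br y h))\<^sup>2 \<le> (\<Sum>a\<in>t. \<bar>c a\<bar> * norm (br a h))\<^sup>2"
      by (simp add: power_mono)
    also have "\<dots> \<le> (\<Sum>a\<in>t. (\<bar>c a\<bar>)\<^sup>2) * (\<Sum>a\<in>t. (norm (br a h))\<^sup>2)"
      by (rule Cauchy_Schwarz_ineq_sum)
    also have "(\<Sum>a\<in>t. (\<bar>c a\<bar>)\<^sup>2) = (norm y)\<^sup>2"
    proof -
      have "(norm y)\<^sup>2 = (\<Sum>a\<in>t. (norm (c a *\<^sub>R a))\<^sup>2)"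
        unfolding y
      proof (rule norm_sum_Pythagorean[OF t(1)])
        show "pairwise (\<lambda>i j. orthogonal (c i *\<^sub>R i) (c j *\<^sub>R j)) t"
          by (rule pairwise_ortho_scaleR) (use t(2) B_orth in \<open>auto simp: pairwise_def\<close>)
      qed
      also have "\<dots> = (\<Sum>a\<in>t. (\<bar>c a\<bar>)\<^sup>2)"
        using t(2) B_norm by (intro sum.cong) auto
      finally show ?thesis by simp
    qed
    also have "(\<Sum>a\<in>t. (norm (br a h))\<^sup>2) \<le> A2 h"
    proof -
      have "(\<Sum>a\<in>t. (norm (br a h))\<^sup>2) = (\<Sum>a\<in>t. (norm (br h a))\<^sup>2)"
        by (intro sum.cong refl arg_cong[where f="\<lambda>t. t^2"] norm_br_sym)
      also have "\<dots> \<le> A2 h" unfolding A2_def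
        by (rule finite_sum_le_infsum[OF section_summable[OF h] t(1) t(2)]) simp
      finally show ?thesis .
    qed
    hence "(norm y)\<^sup>2 * (\<Sum>a\<in>t. (norm (br a h))\<^sup>2) \<le> (norm y)\<^sup>2 * A2 h"
      by (simp add: mult_left_mono)
    finally show "y \<in> {y. (norm (br y h))\<^sup>2 \<le> A2 h * (norm y)\<^sup>2}" by (simp add: mult.commute)
  qed
  have "closure (span B) \<subseteq> {y. (norm (br y h))\<^sup>2 \<le> A2 h * (norm y)\<^sup>2}"
    by (rule closure_minimal[OF sp cl])
  thus ?thesis using B_dense by auto
qed

definition A :: "'a \<Rightarrow> real" where "A h = sqrt (A2 h)"

lemma A_nonneg: "A h \<ge> 0" by (simp add: A_def A2_nonneg)
lemma A_sq: "(A h)\<^sup>2 = A2 h" by (simp add: A_def A2_nonneg)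

lemma A_bound: "h \<in> B \<Longrightarrow> norm (br y h) \<le> A h * norm y"
proof -
  assume h: "h \<in> B"
  have e: "(A h * norm y)\<^sup>2 = A2 h * (norm y)\<^sup>2" by (simp only: power_mult_distrib A_sq)
  have "(norm (br y h))\<^sup>2 \<le> (A h * norm y)\<^sup>2"
    unfolding e by (rule A2_bound_sq[OF h])
  moreover have "0 \<le> A h * norm y" by (intro mult_nonneg_nonneg A_nonneg norm_ge_zero)
  ultimately show ?thesis by (rule power2_le_imp_le)
qed

lemma A_bound': "h \<in> B \<Longrightarrow> norm (br h y) \<le> A h * norm y"
  using A_bound[of h y] norm_br_sym[of h y] by simp

end


lemma cs_bound:
  fixes t a b :: "'x \<Rightarrow> real"
  assumes t: "\<And>x. x \<in> X \<Longrightarrow> 0 \<le> t x" "\<And>x. x \<in> X \<Longrightarrow> t x \<le> a x * b x"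
    and ab: "\<And>x. x \<in> X \<Longrightarrow> 0 \<le> a x" "\<And>x. x \<in> X \<Longrightarrow> 0 \<le> b x"
    and U: "((\<lambda>x. (a x)\<^sup>2) has_sum U) X" and W: "((\<lambda>x. (b x)\<^sup>2) has_sum W) X"
  shows "t summable_on X" "infsum t X \<le> sqrt U * sqrt W"
proof -
  have le: "t x \<le> ((a x)\<^sup>2 + (b x)\<^sup>2) / 2" if "x \<in> X" for x
  proof -
    have "0 \<le> (a x - b x)\<^sup>2" by simp
    hence "2 * (a x * b x) \<le> (a x)\<^sup>2 + (b x)\<^sup>2" by (simp add: power2_eq_square algebra_simps)
    hence "a x * b x \<le> ((a x)\<^sup>2 + (b x)\<^sup>2) / 2" by simp
    thus ?thesis using t(2)[OF that] by (rule order_trans[rotated])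
  qed
  have "(\<lambda>x. ((a x)\<^sup>2 + (b x)\<^sup>2) * (1/2)) summable_on X"
    using summable_on_add[OF has_sum_imp_summable[OF U] has_sum_imp_summable[OF W]]
    by (rule summable_on_cmult_left)
  hence "(\<lambda>x. ((a x)\<^sup>2 + (b x)\<^sup>2) / 2) summable_on X" by simp
  thus ts: "t summable_on X"
    by (rule summable_on_comparison_test) (use le t(1) in auto)
  show "infsum t X \<le> sqrt U * sqrt W"
  proof (rule infsum_le_finite_sums[OF ts])
    fix F assume F: "finite F" "F \<subseteq> X"
    have "sum t F \<le> (\<Sum>x\<in>F. a x * b x)"
      by (rule sum_mono) (use F t(2) in blast)
    also have "\<dots> \<le> sqrt ((\<Sum>x\<in>F. (a x)\<^sup>2) * (\<Sum>x\<in>F. (b x)\<^sup>2))"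
      by (rule real_le_rsqrt) (rule Cauchy_Schwarz_ineq_sum)
    also have "\<dots> \<le> sqrt (U * W)"
    proof -
      have "(\<Sum>x\<in>F. (a x)\<^sup>2) \<le> U"
        by (rule finite_sum_le_has_sum[OF U F]) simp
      moreover have "(\<Sum>x\<in>F. (b x)\<^sup>2) \<le> W"
        by (rule finite_sum_le_has_sum[OF W F]) simp
      moreover have "0 \<le> U" by (rule has_sum_nonneg[OF U]) simp
      moreover have "0 \<le> (\<Sum>x\<in>F. (b x)\<^sup>2)" by (rule sum_nonneg) simp
      ultimately have "(\<Sum>x\<in>F. (a x)\<^sup>2) * (\<Sum>x\<in>F. (b x)\<^sup>2) \<le> U * W"
        by (rule mult_mono)
      thus ?thesis by (rule real_sqrt_le_mono)
    qed
    finally show "sum t F \<le> sqrt U * sqrt W" by (simp only: real_sqrt_mult)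
  qed
qed

context fixes br :: "'a::real_normed_vector \<Rightarrow> 'a \<Rightarrow> 'a" assumes bbl: "bounded_bilinear br"
begin

lemma foldl_bound:
  assumes "\<And>z Z. z \<in> set zs \<Longrightarrow> norm (br Z z) \<le> w z * norm Z" "\<And>z. z \<in> set zs \<Longrightarrow> 0 \<le> w z"
  shows "norm (foldl br c zs) \<le> norm c * prod_list (map w zs)"
  using assms
proof (induction zs arbitrary: c)
  case Nil thus ?case by simp
next
  case (Cons z zs)
  have "norm (foldl br (br c z) zs) \<le> norm (br c z) * prod_list (map w zs)"
    using Cons by simp
  also have "\<dots> \<le> (w z * norm c) * prod_list (map w zs)"
    using Cons.prems by (intro mult_right_mono prod_list_nonneg) auto
  finally show ?case by (simp add: mult_ac)
qed

lemma foldl_zero: "foldl br 0 zs = 0"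
proof (induction zs)
  case Nil thus ?case by simp
next
  case (Cons z zs)
  have "br 0 z = 0" using bounded_bilinear.zero_left[OF bbl] .
  thus ?case using Cons by simp
qed

lemma foldl_lin: "linear f \<Longrightarrow> linear (\<lambda>x. foldl br (f x) zs)"
proof (induction zs arbitrary: f)
  case Nil thus ?case by simp
next
  case (Cons z zs)
  have "linear (\<lambda>a. br a z)"
    by (rule bounded_linear.linear[OF bounded_bilinear.bounded_linear_left[OF bbl]])
  hence "linear ((\<lambda>a. br a z) \<circ> f)" by (rule linear_compose[OF Cons.prems])
  hence "linear (\<lambda>x. br (f x) z)" by (simp add: o_def)
  thus ?case using Cons.IH by simp
qed

lemma foldl_lin_upd: "m < length zs \<Longrightarrow> linear (\<lambda>x. foldl br c (zs[m := x]))"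
proof (induction zs arbitrary: c m)
  case Nil thus ?case by simp
next
  case (Cons z zs)
  show ?case
  proof (cases m)
    case 0
    have "linear (br c)"
      by (rule bounded_linear.linear[OF bounded_bilinear.bounded_linear_right[OF bbl]])
    thus ?thesis using foldl_lin[of "br c" zs] 0 by simp
  next
    case (Suc m')
    thus ?thesis using Cons.IH[of m' "br c z"] Cons.prems by simp
  qed
qed

lemma iter_lin_upd:
  assumes m: "m < length zs" shows "linear (\<lambda>x. iter_bracket br (zs[m := x]))"
proof (cases zs)
  case Nil thus ?thesis using m by simp
next
  case (Cons z0 zs')
  show ?thesis
  proof (cases m)
    case 0
    thus ?thesis using foldl_lin[of "\<lambda>x. x" zs'] Cons by (simp add: iter_bracket_def linear_id[unfolded id_def])
  next
    case (Suc m')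
    thus ?thesis using foldl_lin_upd[of m' zs' z0] Cons m by (simp add: iter_bracket_def)
  qed
qed

end

lemma interleave_map:
  "set \<alpha> \<subseteq> {1,2} \<Longrightarrow> length xs = p_of \<alpha> \<Longrightarrow> length ys = q_of \<alpha> \<Longrightarrow>
   interleave \<alpha> (map f xs) (map g ys) = map (case_sum f g) (interleave \<alpha> (map Inl xs) (map Inr ys))"
proof (induction \<alpha> arbitrary: xs ys)
  case Nil thus ?case by simp
next
  case (Cons a as)
  show ?case
  proof (cases "a = 1")
    case True
    with Cons.prems obtain x xs' where xs: "xs = x # xs'" by (cases xs) (auto simp: p_of_def)
    have "length xs' = p_of as" "length ys = q_of as" using Cons.prems True xs by (auto simp: p_of_def q_of_def)
    thus ?thesis using Cons True xs by simp
  next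
    case False
    with Cons.prems have a2: "a = 2" by auto
    with Cons.prems obtain y ys' where ys: "ys = y # ys'" by (cases ys) (auto simp: q_of_def)
    have "length xs = p_of as" "length ys' = q_of as" using Cons.prems a2 ys by (auto simp: p_of_def q_of_def)
    thus ?thesis using Cons a2 ys by simp
  qed
qed

lemma interleave_mset:
  "set \<alpha> \<subseteq> {1,2} \<Longrightarrow> length xs = p_of \<alpha> \<Longrightarrow> length ys = q_of \<alpha> \<Longrightarrow>
   mset (interleave \<alpha> xs ys) = mset xs + mset ys + mset ys"
proof (induction \<alpha> arbitrary: xs ys)
  case Nil thus ?case by (simp add: p_of_def q_of_def)
next
  case (Cons a as)
  show ?case
  proof (cases "a = 1")
    case True
    with Cons.prems obtain x xs' where xs: "xs = x # xs'" by (cases xs) (auto simp: p_of_def)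
    have "length xs' = p_of as" "length ys = q_of as" using Cons.prems True xs by (auto simp: p_of_def q_of_def)
    thus ?thesis using Cons True xs by simp
  next
    case False
    with Cons.prems have a2: "a = 2" by auto
    with Cons.prems obtain y ys' where ys: "ys = y # ys'" by (cases ys) (auto simp: q_of_def)
    have "length xs = p_of as" "length ys' = q_of as" using Cons.prems a2 ys by (auto simp: p_of_def q_of_def)
    thus ?thesis using Cons a2 ys by simp
  qed
qed

lemma pq_sum: "set \<alpha> \<subseteq> {1,2} \<Longrightarrow> p_of \<alpha> + 2 * q_of \<alpha> = sum_list \<alpha>"
  by (induction \<alpha>) (auto simp: p_of_def q_of_def)


lemma foldl_bound_lab:
  fixes br :: "'a::real_normed_vector \<Rightarrow> 'a \<Rightarrow> 'a"
  assumes "\<And>l Z. l \<in> set ls \<Longrightarrow> norm (br Z (v l)) \<le> w l * norm Z" "\<And>l. l \<in> set ls \<Longrightarrow> 0 \<le> w l"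
  shows "norm (foldl br c (map v ls)) \<le> norm c * prod_list (map w ls)"
  using assms
proof (induction ls arbitrary: c)
  case Nil thus ?case by simp
next
  case (Cons l ls)
  have "norm (foldl br (br c (v l)) (map v ls)) \<le> norm (br c (v l)) * prod_list (map w ls)"
    using Cons by simp
  also have "\<dots> \<le> (w l * norm c) * prod_list (map w ls)"
    using Cons.prems by (intro mult_right_mono prod_list_nonneg) auto
  finally show ?case by (simp add: mult_ac)
qed

locale pset = hsl B br r
  for B :: "'a::{real_inner,complete_space} set" and br r +
  fixes n :: nat and \<sigma> :: "nat \<Rightarrow> nat" and \<alpha> :: "nat list"
  assumes \<sigma>: "\<sigma> permutes {..<n}" and \<alpha>12: "set \<alpha> \<subseteq> {1,2}" and \<alpha>n: "sum_list \<alpha> = n" and n2: "2 \<le> n"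
begin

abbreviation "p \<equiv> p_of \<alpha>"
abbreviation "q \<equiv> q_of \<alpha>"

definition L :: "(nat + nat) list" where "L = interleave \<alpha> (map Inl [0..<p]) (map Inr [0..<q])"
definition M :: "(nat + nat) list" where "M = permute_list \<sigma> L"
definition lval :: "'a list \<Rightarrow> 'a list \<Rightarrow> nat + nat \<Rightarrow> 'a" where
  "lval ks hs = case_sum (\<lambda>a. ks ! a) (\<lambda>j. hs ! j)"
definition Lset :: "(nat + nat) set" where "Lset = Inl ` {..<p} \<union> Inr ` {..<q}"

lemma mset_L0: "mset L = mset (map Inl [0..<p]) + mset (map Inr [0..<q]) + mset (map Inr [0..<q])"
  unfolding L_def by (rule interleave_mset[OF \<alpha>12]) simp_all

lemma length_L: "length L = n"
proof -
  have "size (mset L) = p + 2 * q" unfolding mset_L0 by simp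
  thus ?thesis using pq_sum[OF \<alpha>12] \<alpha>n by simp
qed

lemma \<sigma>L: "\<sigma> permutes {..<length L}" using \<sigma> length_L by simp

lemma length_M: "length M = n" unfolding M_def using length_L by simp

lemma mset_M: "mset M = mset L" unfolding M_def by (rule mset_permute_list[OF \<sigma>L])

lemma mset_L: "mset L = mset_set (Inr ` {..<q}) + mset_set Lset"
proof -
  have d1: "distinct (map Inr [0..<q] :: (nat+nat) list)" by (simp add: distinct_map)
  have d2: "distinct (map Inl [0..<p] @ map Inr [0..<q] :: (nat+nat) list)" by (auto simp: distinct_map)
  have e1: "mset (map Inr [0..<q] :: (nat+nat) list) = mset_set (Inr ` {..<q})"
    using mset_set_set[OF d1] by (simp add: lessThan_atLeast0)
  have e2: "mset (map Inl [0..<p] @ map Inr [0..<q] :: (nat+nat) list) = mset_set Lset"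
    using mset_set_set[OF d2] by (simp add: Lset_def lessThan_atLeast0)
  show ?thesis unfolding mset_L0 using e1 e2 by (simp add: add_ac)
qed

lemma set_M: "set M = Lset"
proof -
  have "set M = set_mset (mset M)" by simp
  also have "\<dots> = Inr ` {..<q} \<union> Lset" unfolding mset_M mset_L by (simp add: Lset_def)
  finally show ?thesis by (auto simp: Lset_def)
qed

lemma term_eq:
  assumes "length ks = p" "length hs = q"
  shows "Fhat_term br n \<sigma> \<alpha> ks hs = iter_bracket br (map (lval ks hs) M)"
proof -
  have ks: "map (\<lambda>a. ks ! a) [0..<p] = ks" using assms(1) map_nth[of ks] by simp
  have hs: "map (\<lambda>j. hs ! j) [0..<q] = hs" using assms(2) map_nth[of hs] by simp
  have "interleave \<alpha> ks hs = interleave \<alpha> (map (\<lambda>a. ks ! a) [0..<p]) (map (\<lambda>j. hs ! j) [0..<q])"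
    using ks hs by simp
  also have "\<dots> = map (lval ks hs) L"
    unfolding L_def lval_def by (rule interleave_map[OF \<alpha>12]) simp_all
  finally have il: "interleave \<alpha> ks hs = map (lval ks hs) L" .
  have "map (\<lambda>i. interleave \<alpha> ks hs ! \<sigma> i) [0..<n] = permute_list \<sigma> (map (lval ks hs) L)"
    unfolding il permute_list_def using length_L by simp
  also have "\<dots> = map (lval ks hs) M"
    unfolding M_def by (rule permute_list_map[OF \<sigma>L])
  finally show ?thesis unfolding Fhat_term_def perm_bracket_def by simp
qed

lemma M_decomp: "M = M ! 0 # M ! 1 # drop 2 M"
proof -
  have "length M \<ge> 2" using length_M n2 by simp
  hence l0: "0 < length M" and l1: "1 < length M" by linarith+
  have a: "M ! 0 # drop 1 M = drop 0 M" using Cons_nth_drop_Suc[OF l0] by simp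
  have b: "M ! 1 # drop 2 M = drop 1 M" using Cons_nth_drop_Suc[OF l1] by (simp add: numeral_2_eq_2)
  show ?thesis using a b by simp
qed

lemma M01_in: "M ! 0 \<in> Lset" "M ! 1 \<in> Lset"
proof -
  have "length M \<ge> 2" using length_M n2 by simp
  hence l0: "0 < length M" and l1: "1 < length M" by linarith+
  have "M ! 0 \<in> set M" by (rule nth_mem[OF l0])
  moreover have "M ! 1 \<in> set M" by (rule nth_mem[OF l1])
  ultimately show "M ! 0 \<in> Lset" "M ! 1 \<in> Lset" using set_M by auto
qed

lemma finite_Lset: "finite Lset" by (simp add: Lset_def)

lemma mset_drop2:
  assumes ne: "M ! 0 \<noteq> M ! 1"
  shows "mset (drop 2 M) = mset_set (Inr ` {..<q}) + mset_set (Lset - {M ! 0, M ! 1})"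
proof -
  let ?P = "{#M ! 0, M ! 1#}"
  have "mset M = ?P + mset (drop 2 M)"
    by (subst M_decomp) simp
  hence e: "mset (drop 2 M) = mset M - ?P" by simp
  have sub: "{M ! 0, M ! 1} \<subseteq> Lset" using M01_in by auto
  have mP: "mset_set {M ! 0, M ! 1} = ?P" using ne by simp
  have d: "mset_set (Lset - {M ! 0, M ! 1}) = mset_set Lset - ?P"
    unfolding mset_set_Diff[OF finite_Lset sub] mP by (rule refl)
  have subP: "?P \<subseteq># mset_set Lset"
    using subset_imp_msubset_mset_set[OF sub finite_Lset] unfolding mP .
  have "mset (drop 2 M) = (mset_set (Inr ` {..<q}) + mset_set Lset) - ?P"
    unfolding e mset_M mset_L by (rule refl)
  also have "\<dots> = mset_set (Inr ` {..<q}) + (mset_set Lset - ?P)"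
    by (rule multiset_diff_union_assoc[OF subP])
  finally show ?thesis unfolding d .
qed

end


context pset begin

definition wl :: "('a \<Rightarrow> real) \<Rightarrow> 'a list \<Rightarrow> 'a list \<Rightarrow> nat + nat \<Rightarrow> real" where
  "wl wk ks hs l = (case l of Inl a \<Rightarrow> wk (ks ! a) | Inr j \<Rightarrow> A (hs ! j))"

lemma iter_M: "iter_bracket br (map v M) = foldl br (br (v (M ! 0)) (v (M ! 1))) (map v (drop 2 M))"
  by (subst M_decomp) (simp add: iter_bracket_def)

lemma term_zero:
  assumes "M ! 0 = M ! 1" "length ks = p" "length hs = q"
  shows "Fhat_term br n \<sigma> \<alpha> ks hs = 0"
proof -
  have "Fhat_term br n \<sigma> \<alpha> ks hs = foldl br (br (lval ks hs (M ! 0)) (lval ks hs (M ! 1))) (map (lval ks hs) (drop 2 M))"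
    unfolding term_eq[OF assms(2,3)] iter_M ..
  also have "\<dots> = foldl br 0 (map (lval ks hs) (drop 2 M))" unfolding assms(1) br_self ..
  also have "\<dots> = 0" by (rule foldl_zero[OF bb])
  finally show ?thesis .
qed

lemma prod_drop2:
  assumes ne: "M ! 0 \<noteq> M ! 1"
  shows "prod_list (map w (drop 2 M)) = (\<Prod>j<q. w (Inr j)) * (\<Prod>l\<in>Lset - {M ! 0, M ! 1}. w l)"
proof -
  have "prod_list (map w (drop 2 M)) = prod_mset (image_mset w (mset (drop 2 M)))"
    by (simp add: prod_mset_prod_list[symmetric])
  also have "\<dots> = prod_mset (image_mset w (mset_set (Inr ` {..<q}))) * prod_mset (image_mset w (mset_set (Lset - {M ! 0, M ! 1})))"
    unfolding mset_drop2[OF ne] by simp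
  also have "\<dots> = prod w (Inr ` {..<q}) * prod w (Lset - {M ! 0, M ! 1})"
    by (simp only: prod_unfold_prod_mset[symmetric])
  also have "prod w (Inr ` {..<q}) = (\<Prod>j<q. w (Inr j))"
    by (subst prod.reindex) (auto simp: inj_on_def)
  finally show ?thesis .
qed

lemma term_bound:
  assumes ne: "M ! 0 \<noteq> M ! 1" and ks: "length ks = p" and hs: "hs \<in> tuples B q"
    and wk: "\<And>a Z. a < p \<Longrightarrow> norm (br Z (ks ! a)) \<le> wk (ks ! a) * norm Z"
    and wk0: "\<And>a. a < p \<Longrightarrow> 0 \<le> wk (ks ! a)"
  shows "norm (Fhat_term br n \<sigma> \<alpha> ks hs) \<le> (\<Prod>j<q. A (hs ! j)) *
           (norm (br (lval ks hs (M ! 0)) (lval ks hs (M ! 1))) * (\<Prod>l\<in>Lset - {M ! 0, M ! 1}. wl wk ks hs l))"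
proof -
  have hl: "length hs = q" and hsB: "set hs \<subseteq> B"
    using hs unfolding tuples_def by simp_all
  have hB: "hs ! j \<in> B" if "j < q" for j
  proof -
    have "hs ! j \<in> set hs" using that hl by (intro nth_mem) simp
    thus ?thesis using hsB by blast
  qed
  let ?v = "lval ks hs" and ?w = "wl wk ks hs"
  have setd: "set (drop 2 M) \<subseteq> Lset" unfolding set_M[symmetric] by (rule set_drop_subset)
  have c1: "norm (br Z (?v l)) \<le> ?w l * norm Z" if "l \<in> set (drop 2 M)" for l Z
  proof -
    have "l \<in> Lset" using that setd by blast
    then consider (a) a where "l = Inl a" "a < p" | (b) j where "l = Inr j" "j < q"
      unfolding Lset_def by blast
    thus ?thesis
    proof cases
      case a thus ?thesis using wk[of a Z] by (simp add: lval_def wl_def)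
    next
      case b thus ?thesis using A_bound[OF hB[OF b(2)], of Z] by (simp add: lval_def wl_def)
    qed
  qed
  have c2: "0 \<le> ?w l" if "l \<in> set (drop 2 M)" for l
  proof -
    have "l \<in> Lset" using that setd by blast
    then consider (a) a where "l = Inl a" "a < p" | (b) j where "l = Inr j" "j < q"
      unfolding Lset_def by blast
    thus ?thesis
    proof cases
      case a thus ?thesis using wk0[of a] by (simp add: wl_def)
    next
      case b thus ?thesis using A_nonneg by (simp add: wl_def)
    qed
  qed
  have "norm (Fhat_term br n \<sigma> \<alpha> ks hs) = norm (foldl br (br (?v (M ! 0)) (?v (M ! 1))) (map ?v (drop 2 M)))"
    unfolding term_eq[OF ks hl] iter_M ..
  also have "\<dots> \<le> norm (br (?v (M ! 0)) (?v (M ! 1))) * prod_list (map ?w (drop 2 M))"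
    by (rule foldl_bound_lab) (use c1 c2 in auto)
  also have "prod_list (map ?w (drop 2 M)) = (\<Prod>j<q. ?w (Inr j)) * (\<Prod>l\<in>Lset - {M ! 0, M ! 1}. ?w l)"
    by (rule prod_drop2[OF ne])
  also have "(\<Prod>j<q. ?w (Inr j)) = (\<Prod>j<q. A (hs ! j))" by (simp add: wl_def)
  finally show ?thesis by (simp add: mult_ac)
qed

end


context pset begin

definition SA :: real where "SA = infsum A2 B"
definition SD :: real where "SD = infsum (\<lambda>(x,y). (norm (br x y))\<^sup>2) (B \<times> B)"

lemma SA_has_sum: "(A2 has_sum SA) B"
  unfolding SA_def using A2_summable by (rule has_sum_infsum)
lemma SD_has_sum: "((\<lambda>(x,y). (norm (br x y))\<^sup>2) has_sum SD) (B \<times> B)"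
  unfolding SD_def using hs by (rule has_sum_infsum)
lemma SA_nonneg: "0 \<le> SA" unfolding SA_def by (rule infsum_nonneg) (rule A2_nonneg)
lemma SD_nonneg: "0 \<le> SD" unfolding SD_def by (rule infsum_nonneg) auto

lemma row_summable: "(\<lambda>h. (norm (br k h))\<^sup>2) summable_on B"
proof (rule summable_on_comparison_test)
  show "(\<lambda>h. A2 h * (norm k)\<^sup>2) summable_on B" by (rule summable_on_cmult_left[OF A2_summable])
  fix h assume h: "h \<in> B"
  show "(norm (br k h))\<^sup>2 \<le> A2 h * (norm k)\<^sup>2" by (rule A2_bound_sq[OF h])
qed simp

lemma row_has_sum: "((\<lambda>h. (norm (br k h))\<^sup>2) has_sum A2 k) B"
  unfolding A2_def using row_summable by (rule has_sum_infsum)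

lemma A2_le: "A2 k \<le> (norm k)\<^sup>2 * SA"
proof -
  have "A2 k \<le> infsum (\<lambda>h. A2 h * (norm k)\<^sup>2) B" unfolding A2_def[of k]
    by (rule infsum_mono[OF row_summable summable_on_cmult_left[OF A2_summable]]) (rule A2_bound_sq)
  also have "\<dots> = SA * (norm k)\<^sup>2" unfolding SA_def by (rule infsum_cmult_left')
  finally show ?thesis by (simp add: mult.commute)
qed

end


context pset begin

definition Pset :: "nat set" where "Pset = {a. a < p \<and> Inl a \<notin> {M ! 0, M ! 1}}"
definition Qset :: "nat set" where "Qset = {j. j < q \<and> Inr j \<notin> {M ! 0, M ! 1}}"

lemma split_prod:
  "(\<Prod>l\<in>Lset - {M ! 0, M ! 1}. f l) = (\<Prod>a\<in>Pset. f (Inl a)) * (\<Prod>j\<in>Qset. f (Inr j))"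
proof -
  have e: "Lset - {M ! 0, M ! 1} = Inl ` Pset \<union> Inr ` Qset"
    unfolding Lset_def Pset_def Qset_def by auto
  have f1: "finite (Inl ` Pset :: (nat+nat) set)" "finite (Inr ` Qset :: (nat+nat) set)"
    unfolding Pset_def Qset_def by auto
  have d: "Inl ` Pset \<inter> Inr ` Qset = ({} :: (nat+nat) set)" by auto
  have "(\<Prod>l\<in>Lset - {M ! 0, M ! 1}. f l) = prod f (Inl ` Pset) * prod f (Inr ` Qset)"
    unfolding e by (rule prod.union_disjoint[OF f1 d])
  also have "prod f (Inl ` Pset) = (\<Prod>a\<in>Pset. f (Inl a))"
    by (subst prod.reindex) (auto simp: inj_on_def)
  also have "prod f (Inr ` Qset) = (\<Prod>j\<in>Qset. f (Inr j))"
    by (subst prod.reindex) (auto simp: inj_on_def)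
  finally show ?thesis .
qed

definition bfun :: "('a \<Rightarrow> real) \<Rightarrow> 'a list \<Rightarrow> 'a list \<Rightarrow> real" where
  "bfun wk ks hs = norm (br (lval ks hs (M ! 0)) (lval ks hs (M ! 1))) * (\<Prod>l\<in>Lset - {M ! 0, M ! 1}. wl wk ks hs l)"

definition Pk :: "('a \<Rightarrow> real) \<Rightarrow> 'a list \<Rightarrow> real" where
  "Pk wk ks = (\<Prod>a\<in>Pset. (wk (ks ! a))\<^sup>2)"

lemma bfun_sq:
  "(bfun wk ks hs)\<^sup>2 = (norm (br (lval ks hs (M ! 0)) (lval ks hs (M ! 1))))\<^sup>2 * (Pk wk ks * (\<Prod>j\<in>Qset. A2 (hs ! j)))"
proof -
  have "(bfun wk ks hs)\<^sup>2 = (norm (br (lval ks hs (M ! 0)) (lval ks hs (M ! 1))))\<^sup>2 * (\<Prod>l\<in>Lset - {M ! 0, M ! 1}. (wl wk ks hs l)\<^sup>2)"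
    unfolding bfun_def power_mult_distrib prod_power_distrib ..
  also have "(\<Prod>l\<in>Lset - {M ! 0, M ! 1}. (wl wk ks hs l)\<^sup>2) = Pk wk ks * (\<Prod>j\<in>Qset. A2 (hs ! j))"
    unfolding split_prod Pk_def by (simp add: wl_def A_sq)
  finally show ?thesis .
qed

definition Gf :: "'a list \<Rightarrow> real" where
  "Gf ks = (case M ! 0 of
      Inl a0 \<Rightarrow> (case M ! 1 of Inl a1 \<Rightarrow> (norm (br (ks ! a0) (ks ! a1)))\<^sup>2 * SA ^ q
                             | Inr j1 \<Rightarrow> A2 (ks ! a0) * SA ^ (q - 1))
    | Inr j0 \<Rightarrow> (case M ! 1 of Inl a1 \<Rightarrow> A2 (ks ! a1) * SA ^ (q - 1)
                             | Inr j1 \<Rightarrow> SD * SA ^ (q - 2)))"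

lemma M_cases:
  obtains (LL) a0 a1 where "M ! 0 = Inl a0" "M ! 1 = Inl a1" "a0 < p" "a1 < p"
  | (LR) a0 j1 where "M ! 0 = Inl a0" "M ! 1 = Inr j1" "a0 < p" "j1 < q"
  | (RL) j0 a1 where "M ! 0 = Inr j0" "M ! 1 = Inl a1" "j0 < q" "a1 < p"
  | (RR) j0 j1 where "M ! 0 = Inr j0" "M ! 1 = Inr j1" "j0 < q" "j1 < q"
proof -
  have "M ! 0 \<in> Lset" "M ! 1 \<in> Lset" by (rule M01_in)+
  thus ?thesis unfolding Lset_def using that by blast
qed

end


context pset begin

lemma all_case: "((\<lambda>hs. \<Prod>j<q. A2 (hs ! j)) has_sum SA ^ q) (tuples B q)"
proof -
  have "((\<lambda>hs. \<Prod>j<q. A2 (hs ! j)) has_sum (\<Prod>j<q. SA)) (tuples B q)"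
    by (rule has_sum_tuples_prod) (simp_all add: SA_has_sum A2_nonneg)
  thus ?thesis by simp
qed

lemma row_case:
  assumes j1: "j1 < q"
  shows "((\<lambda>hs. (norm (br k (hs ! j1)))\<^sup>2 * (\<Prod>j\<in>{..<q}-{j1}. A2 (hs ! j))) has_sum (A2 k * SA ^ (q - 1))) (tuples B q)"
proof -
  define F where "F j = (if j = j1 then (\<lambda>h. (norm (br k h))\<^sup>2) else A2)" for j
  define s where "s j = (if j = j1 then A2 k else SA)" for j
  have h: "((\<lambda>hs. \<Prod>j<q. F j (hs ! j)) has_sum (\<Prod>j<q. s j)) (tuples B q)"
  proof (rule has_sum_tuples_prod)
    fix j assume "j < q"
    show "(F j has_sum s j) B" by (cases "j = j1") (simp_all add: F_def s_def row_has_sum SA_has_sum)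
    fix y show "0 \<le> F j y" by (cases "j = j1") (simp_all add: F_def A2_nonneg)
  qed
  have fin: "finite {..<q}" by simp
  have jin: "j1 \<in> {..<q}" using j1 by simp
  have e1: "(\<Prod>j<q. F j (hs ! j)) = (norm (br k (hs ! j1)))\<^sup>2 * (\<Prod>j\<in>{..<q}-{j1}. A2 (hs ! j))" for hs
  proof -
    have "(\<Prod>j<q. F j (hs ! j)) = F j1 (hs ! j1) * (\<Prod>j\<in>{..<q}-{j1}. F j (hs ! j))"
      by (rule prod.remove[OF fin jin])
    also have "(\<Prod>j\<in>{..<q}-{j1}. F j (hs ! j)) = (\<Prod>j\<in>{..<q}-{j1}. A2 (hs ! j))"
      by (rule prod.cong) (simp_all add: F_def)
    finally show ?thesis by (simp add: F_def)
  qed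
  have e2: "(\<Prod>j<q. s j) = A2 k * SA ^ (q - 1)"
  proof -
    have "(\<Prod>j<q. s j) = s j1 * (\<Prod>j\<in>{..<q}-{j1}. s j)" by (rule prod.remove[OF fin jin])
    also have "(\<Prod>j\<in>{..<q}-{j1}. s j) = (\<Prod>j\<in>{..<q}-{j1}. SA)"
      by (rule prod.cong) (simp_all add: s_def)
    also have "\<dots> = SA ^ (q - 1)" using jin by (simp add: card_Diff_singleton)
    finally show ?thesis by (simp add: s_def)
  qed
  show ?thesis using h unfolding e1 e2 .
qed

lemma pair_case:
  assumes j: "j0 < q" "j1 < q" "j0 \<noteq> j1"
  shows "((\<lambda>hs. (norm (br (hs ! j0) (hs ! j1)))\<^sup>2 * (\<Prod>j\<in>{..<q}-{j0,j1}. A2 (hs ! j))) has_sum (SD * SA ^ (q - 2))) (tuples B q)"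
proof -
  have h: "((\<lambda>hs. (\<lambda>(x,y). (norm (br x y))\<^sup>2) (hs ! j0, hs ! j1) * (\<Prod>i\<in>{..<q}-{j0,j1}. A2 (hs ! i))) has_sum (SD * (\<Prod>i\<in>{..<q}-{j0,j1}. SA))) (tuples B q)"
    by (rule has_sum_tuples_pair[OF j SD_has_sum]) (auto simp: SA_has_sum A2_nonneg)
  have c: "card ({..<q}-{j0,j1}) = q - 2"
  proof -
    have "{j0,j1} \<subseteq> {..<q}" using j by auto
    hence "card ({..<q}-{j0,j1}) = card {..<q} - card {j0,j1}" by (intro card_Diff_subset) auto
    thus ?thesis using j(3) by simp
  qed
  show ?thesis using h by (simp add: c)
qed

lemma b2_has_sum:
  assumes ne: "M ! 0 \<noteq> M ! 1"
  shows "((\<lambda>hs. (bfun wk ks hs)\<^sup>2) has_sum (Pk wk ks * Gf ks)) (tuples B q)"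
proof (cases rule: M_cases)
  case (LL a0 a1)
  have Q: "Qset = {..<q}" unfolding Qset_def using LL by auto
  have "((\<lambda>hs. ((norm (br (ks ! a0) (ks ! a1)))\<^sup>2 * Pk wk ks) * (\<Prod>j<q. A2 (hs ! j))) has_sum
          (((norm (br (ks ! a0) (ks ! a1)))\<^sup>2 * Pk wk ks) * SA ^ q)) (tuples B q)"
    by (rule has_sum_cmult_right[OF all_case])
  moreover have "(\<lambda>hs. (bfun wk ks hs)\<^sup>2) = (\<lambda>hs. ((norm (br (ks ! a0) (ks ! a1)))\<^sup>2 * Pk wk ks) * (\<Prod>j<q. A2 (hs ! j)))"
    unfolding bfun_sq Q using LL by (simp add: lval_def mult_ac)
  moreover have "Gf ks = (norm (br (ks ! a0) (ks ! a1)))\<^sup>2 * SA ^ q"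
    using LL by (simp add: Gf_def)
  ultimately show ?thesis by (simp only: mult_ac)
next
  case (LR a0 j1)
  have Q: "Qset = {..<q} - {j1}" unfolding Qset_def using LR by auto
  have "((\<lambda>hs. Pk wk ks * ((norm (br (ks ! a0) (hs ! j1)))\<^sup>2 * (\<Prod>j\<in>{..<q}-{j1}. A2 (hs ! j)))) has_sum
          (Pk wk ks * (A2 (ks ! a0) * SA ^ (q - 1)))) (tuples B q)"
    by (rule has_sum_cmult_right[OF row_case[OF LR(4)]])
  moreover have "(\<lambda>hs. (bfun wk ks hs)\<^sup>2) = (\<lambda>hs. Pk wk ks * ((norm (br (ks ! a0) (hs ! j1)))\<^sup>2 * (\<Prod>j\<in>{..<q}-{j1}. A2 (hs ! j))))"
    unfolding bfun_sq Q using LR by (simp add: lval_def mult_ac)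
  moreover have "Gf ks = A2 (ks ! a0) * SA ^ (q - 1)"
    using LR by (simp add: Gf_def)
  ultimately show ?thesis by (simp only: mult_ac)
next
  case (RL j0 a1)
  have Q: "Qset = {..<q} - {j0}" unfolding Qset_def using RL by auto
  have "((\<lambda>hs. Pk wk ks * ((norm (br (ks ! a1) (hs ! j0)))\<^sup>2 * (\<Prod>j\<in>{..<q}-{j0}. A2 (hs ! j)))) has_sum
          (Pk wk ks * (A2 (ks ! a1) * SA ^ (q - 1)))) (tuples B q)"
    by (rule has_sum_cmult_right[OF row_case[OF RL(3)]])
  moreover have "(\<lambda>hs. (bfun wk ks hs)\<^sup>2) = (\<lambda>hs. Pk wk ks * ((norm (br (ks ! a1) (hs ! j0)))\<^sup>2 * (\<Prod>j\<in>{..<q}-{j0}. A2 (hs ! j))))"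
  proof -
    have "norm (br (hs ! j0) (ks ! a1)) = norm (br (ks ! a1) (hs ! j0))" for hs by (rule norm_br_sym)
    thus ?thesis unfolding bfun_sq Q using RL by (simp add: lval_def mult_ac)
  qed
  moreover have "Gf ks = A2 (ks ! a1) * SA ^ (q - 1)"
    using RL by (simp add: Gf_def)
  ultimately show ?thesis by (simp only: mult_ac)
next
  case (RR j0 j1)
  have j01: "j0 \<noteq> j1" using RR ne by auto
  have Q: "Qset = {..<q} - {j0, j1}" unfolding Qset_def using RR by auto
  have "((\<lambda>hs. Pk wk ks * ((norm (br (hs ! j0) (hs ! j1)))\<^sup>2 * (\<Prod>j\<in>{..<q}-{j0,j1}. A2 (hs ! j)))) has_sum
          (Pk wk ks * (SD * SA ^ (q - 2)))) (tuples B q)"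
    by (rule has_sum_cmult_right[OF pair_case[OF RR(3,4) j01]])
  moreover have "(\<lambda>hs. (bfun wk ks hs)\<^sup>2) = (\<lambda>hs. Pk wk ks * ((norm (br (hs ! j0) (hs ! j1)))\<^sup>2 * (\<Prod>j\<in>{..<q}-{j0,j1}. A2 (hs ! j))))"
    unfolding bfun_sq Q using RR by (simp add: lval_def mult_ac)
  moreover have "Gf ks = SD * SA ^ (q - 2)"
    using RR by (simp add: Gf_def)
  ultimately show ?thesis by (simp only: mult_ac)
qed

end


lemma abs_summable_summable_cs:
  fixes f :: \<open>'a \<Rightarrow> 'b :: {real_normed_vector, complete_space}\<close>
  assumes \<open>f abs_summable_on A\<close>
  shows \<open>f summable_on A\<close>
proof -
  from assms obtain L where lim: \<open>(sum (\<lambda>x. norm (f x)) \<longlongrightarrow> L) (finite_subsets_at_top A)\<close>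
    unfolding has_sum_def summable_on_def by blast
  then have *: \<open>cauchy_filter (filtermap (sum (\<lambda>x. norm (f x))) (finite_subsets_at_top A))\<close>
    by (auto intro!: nhds_imp_cauchy_filter simp: filterlim_def)
  have \<open>\<exists>P. eventually P (finite_subsets_at_top A) \<and>
              (\<forall>F F'. P F \<and> P F' \<longrightarrow> dist (sum f F) (sum f F') < e)\<close> if \<open>e>0\<close> for e
  proof -
    define d P where \<open>d = e/4\<close> and \<open>P F \<longleftrightarrow> finite F \<and> F \<subseteq> A \<and> dist (sum (\<lambda>x. norm (f x)) F) L < d\<close> for F
    then have \<open>d > 0\<close>
      by (simp add: d_def that)
    have ev_P: \<open>eventually P (finite_subsets_at_top A)\<close>
      using lim
      by (auto simp add: P_def[abs_def] \<open>0 < d\<close> eventually_conj_iff eventually_finite_subsets_at_top_weakI tendsto_iff)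
    
    moreover have \<open>dist (sum f F1) (sum f F2) < e\<close> if \<open>P F1\<close> and \<open>P F2\<close> for F1 F2
    proof -
      from ev_P
      obtain F' where \<open>finite F'\<close> and \<open>F' \<subseteq> A\<close> and P_sup_F': \<open>finite F \<and> F \<supseteq> F' \<and> F \<subseteq> A \<Longrightarrow> P F\<close> for F
        by atomize_elim (simp add: eventually_finite_subsets_at_top)
      define F where \<open>F = F' \<union> F1 \<union> F2\<close>
      have \<open>finite F\<close> and \<open>F \<subseteq> A\<close>
        using F_def P_def[abs_def] that \<open>finite F'\<close> \<open>F' \<subseteq> A\<close> by auto
      have dist_F: \<open>dist (sum (\<lambda>x. norm (f x)) F) L < d\<close>
        by (metis F_def \<open>F \<subseteq> A\<close> P_def P_sup_F' \<open>finite F\<close> le_supE order_refl)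

      have dist_F_subset: \<open>dist (sum f F) (sum f F') < 2*d\<close> if F': \<open>F' \<subseteq> F\<close> \<open>P F'\<close> for F'
      proof -
        have \<open>dist (sum f F) (sum f F') = norm (sum f (F-F'))\<close>
          unfolding dist_norm using \<open>finite F\<close> F' by (subst sum_diff) auto
        also have \<open>\<dots> \<le> norm (\<Sum>x\<in>F-F'. norm (f x))\<close>
          by (rule order.trans[OF sum_norm_le[OF order.refl]]) auto
        also have \<open>\<dots> = dist (\<Sum>x\<in>F. norm (f x)) (\<Sum>x\<in>F'. norm (f x))\<close>
          unfolding dist_norm using \<open>finite F\<close> F' by (subst sum_diff) auto
        also have \<open>\<dots> < 2 * d\<close>
          using dist_F F' unfolding P_def dist_norm real_norm_def by linarith
        finally show \<open>dist (sum f F) (sum f F') < 2*d\<close> .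
      qed

      have \<open>dist (sum f F1) (sum f F2) \<le> dist (sum f F) (sum f F1) + dist (sum f F) (sum f F2)\<close>
        by (rule dist_triangle3)
      also have \<open>\<dots> < 2 * d + 2 * d\<close>
        by (intro add_strict_mono dist_F_subset that) (auto simp: F_def)
      also have \<open>\<dots> \<le> e\<close>
        by (auto simp: d_def)
      finally show \<open>dist (sum f F1) (sum f F2) < e\<close> .
    qed
    then show ?thesis
      using ev_P by blast
  qed
  then have \<open>cauchy_filter (filtermap (sum f) (finite_subsets_at_top A))\<close>
    by (simp add: cauchy_filter_metric_filtermap)
  moreover have "complete (UNIV::'b set)"
    by (meson Cauchy_convergent UNIV_I complete_def convergent_def)
  ultimately obtain L' where \<open>(sum f \<longlongrightarrow> L') (finite_subsets_at_top A)\<close>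
    using complete_uniform[where S=UNIV] by (force simp add: filterlim_def)
  then show ?thesis
    using summable_on_def has_sum_def by blast
qed


context pset begin

lemma main_ks:
  assumes ne: "M ! 0 \<noteq> M ! 1" and ks: "length ks = p"
    and wk: "\<And>a Z. a < p \<Longrightarrow> norm (br Z (ks ! a)) \<le> wk (ks ! a) * norm Z"
    and wk0: "\<And>a. a < p \<Longrightarrow> 0 \<le> wk (ks ! a)"
  shows "Fhat_term br n \<sigma> \<alpha> ks summable_on tuples B q"
    and "norm (Fhat B br n \<sigma> \<alpha> ks) \<le> sqrt (SA ^ q) * sqrt (Pk wk ks * Gf ks)"
proof -
  let ?t = "\<lambda>hs. norm (Fhat_term br n \<sigma> \<alpha> ks hs)"
  let ?a = "\<lambda>hs. \<Prod>j<q. A (hs ! j)"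
  let ?b = "bfun wk ks"
  have tb: "?t hs \<le> ?a hs * ?b hs" if "hs \<in> tuples B q" for hs
    using term_bound[OF ne ks that wk wk0] unfolding bfun_def by simp
  have a0: "0 \<le> ?a hs" for hs by (intro prod_nonneg) (simp add: A_nonneg)
  have b0: "0 \<le> ?b hs" for hs
    unfolding bfun_def
  proof (intro mult_nonneg_nonneg prod_nonneg norm_ge_zero)
    fix l assume "l \<in> Lset - {M ! 0, M ! 1}"
    then consider (a) a where "l = Inl a" "a < p" | (b) j where "l = Inr j"
      unfolding Lset_def by blast
    thus "0 \<le> wl wk ks hs l"
    proof cases
      case a thus ?thesis using wk0[of a] by (simp add: wl_def)
    next
      case b thus ?thesis using A_nonneg by (simp add: wl_def)
    qed
  qed
  have asq: "(\<lambda>hs. (?a hs)\<^sup>2) = (\<lambda>hs. \<Prod>j<q. A2 (hs ! j))"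
    by (simp add: prod_power_distrib A_sq)
  have U: "((\<lambda>hs. (?a hs)\<^sup>2) has_sum SA ^ q) (tuples B q)" unfolding asq by (rule all_case)
  have W: "((\<lambda>hs. (?b hs)\<^sup>2) has_sum (Pk wk ks * Gf ks)) (tuples B q)" by (rule b2_has_sum[OF ne])
  have ts: "?t summable_on tuples B q" and tle: "infsum ?t (tuples B q) \<le> sqrt (SA ^ q) * sqrt (Pk wk ks * Gf ks)"
    by (rule cs_bound[OF _ tb _ _ U W]; simp add: a0 b0)+
  show "Fhat_term br n \<sigma> \<alpha> ks summable_on tuples B q"
    by (rule abs_summable_summable_cs[OF ts])
  have "norm (Fhat B br n \<sigma> \<alpha> ks) \<le> infsum ?t (tuples B q)"
    unfolding Fhat_def by (rule norm_infsum_bound[OF ts])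
  thus "norm (Fhat B br n \<sigma> \<alpha> ks) \<le> sqrt (SA ^ q) * sqrt (Pk wk ks * Gf ks)" using tle by linarith
qed

end


lemma unique_pos:
  assumes "count (mset xs) v = 1"
  shows "\<exists>m<length xs. xs ! m = v \<and> (\<forall>m'<length xs. xs ! m' = v \<longrightarrow> m' = m)"
proof -
  have "card {i. i < length xs \<and> v = xs ! i} = 1"
    using assms unfolding count_mset count_list_eq_length_filter length_filter_conv_card .
  then obtain m where m: "{i. i < length xs \<and> v = xs ! i} = {m}"
    using card_1_singleton_iff[of "{i. i < length xs \<and> v = xs ! i}"] by auto
  have "m \<in> {i. i < length xs \<and> v = xs ! i}" using m by simp
  hence "m < length xs" "xs ! m = v" by simp_all
  moreover have "m' = m" if "m' < length xs" "xs ! m' = v" for m'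
  proof -
    have "m' \<in> {i. i < length xs \<and> v = xs ! i}" using that by simp
    thus ?thesis unfolding m by simp
  qed
  ultimately show ?thesis by blast
qed

context pset begin

lemma count_Inl: "i < p \<Longrightarrow> count (mset M) (Inl i) = 1"
  unfolding mset_M mset_L by (auto simp: Lset_def count_mset_set')

lemma lval_upd:
  assumes ks: "length ks = p" and i: "i < p" and m: "m < length M" "M ! m = Inl i"
    and u: "\<And>m'. m' < length M \<Longrightarrow> M ! m' = Inl i \<Longrightarrow> m' = m"
  shows "map (lval (ks[i := x]) hs) M = (map (lval ks hs) M)[m := x]"
proof (rule nth_equalityI)
  show "length (map (lval (ks[i := x]) hs) M) = length ((map (lval ks hs) M)[m := x])" by simp
  fix k assume k: "k < length (map (lval (ks[i := x]) hs) M)"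
  hence k': "k < length M" by simp
  show "map (lval (ks[i := x]) hs) M ! k = (map (lval ks hs) M)[m := x] ! k"
  proof (cases "k = m")
    case True thus ?thesis using m ks i by (simp add: lval_def)
  next
    case False
    hence ne: "M ! k \<noteq> Inl i" using u k' by blast
    have "lval (ks[i := x]) hs (M ! k) = lval ks hs (M ! k)"
    proof (cases "M ! k")
      case (Inl a) thus ?thesis using ne by (simp add: lval_def)
    next
      case (Inr j) thus ?thesis by (simp add: lval_def)
    qed
    thus ?thesis using False k' by simp
  qed
qed

lemma Fhat_linear:
  assumes sm: "\<And>ks'. length ks' = p \<Longrightarrow> Fhat_term br n \<sigma> \<alpha> ks' summable_on tuples B q"
    and ks: "length ks = p" and i: "i < p"
  shows "linear (\<lambda>x. Fhat B br n \<sigma> \<alpha> (ks[i := x]))"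
proof -
  obtain m where m: "m < length M" "M ! m = Inl i"
    and u: "\<And>m'. m' < length M \<Longrightarrow> M ! m' = Inl i \<Longrightarrow> m' = m"
    using unique_pos[OF count_Inl[OF i]] by blast
  define T where "T hs x = iter_bracket br ((map (lval ks hs) M)[m := x])" for hs x
  have linT: "linear (T hs)" for hs
    unfolding T_def by (rule iter_lin_upd[OF bb]) (simp add: m(1))
  have len: "length (ks[i := x]) = p" for x using ks by simp
  have tT: "Fhat_term br n \<sigma> \<alpha> (ks[i := x]) hs = T hs x" if "hs \<in> tuples B q" for hs x
  proof -
    have hl: "length hs = q" using that by (simp add: tuples_def)
    show ?thesis unfolding term_eq[OF len hl] T_def by (simp add: lval_upd[OF ks i m u])
  qed
  have F: "Fhat B br n \<sigma> \<alpha> (ks[i := x]) = infsum (\<lambda>hs. T hs x) (tuples B q)" for x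
    unfolding Fhat_def by (rule infsum_cong) (rule tT)
  have S: "(\<lambda>hs. T hs x) summable_on tuples B q" for x
    using sm[OF len[of x]] by (rule summable_on_cong[THEN iffD1, rotated]) (rule tT)
  show ?thesis
  proof (rule linearI)
    fix x y
    have "infsum (\<lambda>hs. T hs (x + y)) (tuples B q) = infsum (\<lambda>hs. T hs x + T hs y) (tuples B q)"
      by (rule infsum_cong) (simp add: linear_add[OF linT])
    also have "\<dots> = infsum (\<lambda>hs. T hs x) (tuples B q) + infsum (\<lambda>hs. T hs y) (tuples B q)"
      by (rule infsum_add[OF S S])
    finally show "Fhat B br n \<sigma> \<alpha> (ks[i := x + y]) = Fhat B br n \<sigma> \<alpha> (ks[i := x]) + Fhat B br n \<sigma> \<alpha> (ks[i := y])"
      unfolding F .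
  next
    fix c x
    have "infsum (\<lambda>hs. T hs (c *\<^sub>R x)) (tuples B q) = infsum (\<lambda>hs. c *\<^sub>R T hs x) (tuples B q)"
      by (rule infsum_cong) (simp add: linear_scale[OF linT])
    also have "\<dots> = c *\<^sub>R infsum (\<lambda>hs. T hs x) (tuples B q)"
      by (rule infsum_scaleR_right)
    finally show "Fhat B br n \<sigma> \<alpha> (ks[i := c *\<^sub>R x]) = c *\<^sub>R Fhat B br n \<sigma> \<alpha> (ks[i := x])"
      unfolding F .
  qed
qed

end


context pset begin

lemma Pset_sub: "Pset \<subseteq> {..<p}" unfolding Pset_def by auto

lemma Pk_K_bound:
  assumes K: "1 \<le> K"
  shows "Pk (\<lambda>k. K * norm k) ks \<le> K ^ (2 * p) * (\<Prod>a\<in>Pset. (norm (ks ! a))\<^sup>2)"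
proof -
  have fin: "finite Pset" using Pset_sub finite_subset by blast
  have "Pk (\<lambda>k. K * norm k) ks = (\<Prod>a\<in>Pset. K\<^sup>2 * (norm (ks ! a))\<^sup>2)"
    unfolding Pk_def by (simp add: power_mult_distrib)
  also have "\<dots> = (K\<^sup>2) ^ card Pset * (\<Prod>a\<in>Pset. (norm (ks ! a))\<^sup>2)"
    by (simp add: prod.distrib)
  also have "\<dots> \<le> K ^ (2 * p) * (\<Prod>a\<in>Pset. (norm (ks ! a))\<^sup>2)"
  proof (rule mult_right_mono)
    have "card Pset \<le> p" using card_mono[OF _ Pset_sub] by simp
    hence "K ^ (2 * card Pset) \<le> K ^ (2 * p)" using K by (intro power_increasing) simp_all
    thus "(K\<^sup>2) ^ card Pset \<le> K ^ (2 * p)" by (simp add: power_mult)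
    show "0 \<le> (\<Prod>a\<in>Pset. (norm (ks ! a))\<^sup>2)" by (intro prod_nonneg) simp
  qed
  finally show ?thesis .
qed

lemma bounded_case:
  assumes ne: "M ! 0 \<noteq> M ! 1" and K: "1 \<le> K" and Kb: "\<And>x y. norm (br x y) \<le> norm x * norm y * K"
  shows "Pk (\<lambda>k. K * norm k) ks * Gf ks \<le>
           (K ^ (2 * p) * (K\<^sup>2 * SA ^ q + SA ^ q + SD * SA ^ (q - 2))) * (\<Prod>a<p. (norm (ks ! a))\<^sup>2)"
proof -
  let ?N = "\<lambda>a. (norm (ks ! a))\<^sup>2"
  let ?C = "K\<^sup>2 * SA ^ q + SA ^ q + SD * SA ^ (q - 2)"
  have SAq: "0 \<le> SA ^ q" "0 \<le> SA ^ (q - 2)" using SA_nonneg by simp_all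
  have c1: "K\<^sup>2 * SA ^ q \<le> ?C" "SA ^ q \<le> ?C" "SD * SA ^ (q - 2) \<le> ?C"
    using SAq SD_nonneg by (simp_all add: mult_nonneg_nonneg)
  have Gf0: "0 \<le> Gf ks"
  proof -
    have "0 \<le> Pk (\<lambda>_. 1) ks * Gf ks"
      by (rule has_sum_nonneg[OF b2_has_sum[OF ne]]) simp
    moreover have "Pk (\<lambda>_. 1) ks = 1" unfolding Pk_def by simp
    ultimately show ?thesis by simp
  qed
  have PkN: "Pk (\<lambda>k. K * norm k) ks * Gf ks \<le> K ^ (2 * p) * ((\<Prod>a\<in>Pset. ?N a) * Gf ks)"
    using mult_right_mono[OF Pk_K_bound[OF K] Gf0] by (simp add: mult_ac)
  have fin: "finite {..<p}" by simp
  have key: "(\<Prod>a\<in>Pset. ?N a) * Gf ks \<le> ?C * (\<Prod>a<p. ?N a)"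
  proof (cases rule: M_cases)
    case (LL a0 a1)
    have a01: "a0 \<noteq> a1" using LL ne by auto
    have P: "Pset = {..<p} - {a0} - {a1}" unfolding Pset_def using LL by auto
    have "(\<Prod>a<p. ?N a) = ?N a0 * (\<Prod>a\<in>{..<p}-{a0}. ?N a)"
      by (rule prod.remove) (use LL in auto)
    also have "(\<Prod>a\<in>{..<p}-{a0}. ?N a) = ?N a1 * (\<Prod>a\<in>{..<p}-{a0}-{a1}. ?N a)"
      by (rule prod.remove) (use LL a01 in auto)
    finally have NP: "(\<Prod>a<p. ?N a) = ?N a0 * ?N a1 * (\<Prod>a\<in>Pset. ?N a)" unfolding P by (simp add: mult_ac)
    have "Gf ks = (norm (br (ks ! a0) (ks ! a1)))\<^sup>2 * SA ^ q" using LL by (simp add: Gf_def)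
    also have "\<dots> \<le> (norm (ks ! a0) * norm (ks ! a1) * K)\<^sup>2 * SA ^ q"
      by (intro mult_right_mono power_mono Kb SAq) simp
    also have "\<dots> = (K\<^sup>2 * SA ^ q) * (?N a0 * ?N a1)" by (simp add: power_mult_distrib mult_ac)
    also have "\<dots> \<le> ?C * (?N a0 * ?N a1)" by (intro mult_right_mono c1) simp
    finally have "Gf ks \<le> ?C * (?N a0 * ?N a1)" .
    hence "(\<Prod>a\<in>Pset. ?N a) * Gf ks \<le> (\<Prod>a\<in>Pset. ?N a) * (?C * (?N a0 * ?N a1))"
      by (intro mult_left_mono prod_nonneg) simp_all
    thus ?thesis unfolding NP by (simp add: mult_ac)
  next
    case (LR a0 j1)
    have P: "Pset = {..<p} - {a0}" unfolding Pset_def using LR by auto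
    have NP: "(\<Prod>a<p. ?N a) = ?N a0 * (\<Prod>a\<in>Pset. ?N a)"
      unfolding P by (rule prod.remove) (use LR in auto)
    have q1: "SA * SA ^ (q - 1) = SA ^ q" using LR(4) by (cases q) simp_all
    have "Gf ks = A2 (ks ! a0) * SA ^ (q - 1)" using LR by (simp add: Gf_def)
    also have "\<dots> \<le> (?N a0 * SA) * SA ^ (q - 1)"
      by (intro mult_right_mono A2_le) (simp add: SA_nonneg)
    also have "\<dots> = SA ^ q * ?N a0" using q1 by (simp add: mult_ac)
    also have "\<dots> \<le> ?C * ?N a0" by (intro mult_right_mono c1) simp
    finally have "Gf ks \<le> ?C * ?N a0" .
    hence "(\<Prod>a\<in>Pset. ?N a) * Gf ks \<le> (\<Prod>a\<in>Pset. ?N a) * (?C * ?N a0)"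
      by (intro mult_left_mono prod_nonneg) simp_all
    thus ?thesis unfolding NP by (simp add: mult_ac)
  next
    case (RL j0 a1)
    have P: "Pset = {..<p} - {a1}" unfolding Pset_def using RL by auto
    have NP: "(\<Prod>a<p. ?N a) = ?N a1 * (\<Prod>a\<in>Pset. ?N a)"
      unfolding P by (rule prod.remove) (use RL in auto)
    have q1: "SA * SA ^ (q - 1) = SA ^ q" using RL(3) by (cases q) simp_all
    have "Gf ks = A2 (ks ! a1) * SA ^ (q - 1)" using RL by (simp add: Gf_def)
    also have "\<dots> \<le> (?N a1 * SA) * SA ^ (q - 1)"
      by (intro mult_right_mono A2_le) (simp add: SA_nonneg)
    also have "\<dots> = SA ^ q * ?N a1" using q1 by (simp add: mult_ac)
    also have "\<dots> \<le> ?C * ?N a1" by (intro mult_right_mono c1) simp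
    finally have "Gf ks \<le> ?C * ?N a1" .
    hence "(\<Prod>a\<in>Pset. ?N a) * Gf ks \<le> (\<Prod>a\<in>Pset. ?N a) * (?C * ?N a1)"
      by (intro mult_left_mono prod_nonneg) simp_all
    thus ?thesis unfolding NP by (simp add: mult_ac)
  next
    case (RR j0 j1)
    have P: "Pset = {..<p}" unfolding Pset_def using RR by auto
    have "Gf ks = SD * SA ^ (q - 2)" using RR by (simp add: Gf_def)
    hence "Gf ks \<le> ?C" using c1 by simp
    hence "(\<Prod>a\<in>Pset. ?N a) * Gf ks \<le> (\<Prod>a\<in>Pset. ?N a) * ?C"
      by (intro mult_left_mono prod_nonneg) simp_all
    thus ?thesis unfolding P by (simp add: mult_ac)
  qed
  have "K ^ (2 * p) * ((\<Prod>a\<in>Pset. ?N a) * Gf ks) \<le> K ^ (2 * p) * (?C * (\<Prod>a<p. ?N a))"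
    using K by (intro mult_left_mono key) simp
  with PkN show ?thesis by (simp add: mult_ac)
qed

end


context pset begin

lemma prodA2_summable: "(\<lambda>ks. \<Prod>a<N. A2 (ks ! a)) summable_on tuples B N"
proof -
  have "((\<lambda>ks. \<Prod>a<N. A2 (ks ! a)) has_sum (\<Prod>a<N. SA)) (tuples B N)"
    by (rule has_sum_tuples_prod) (simp_all add: SA_has_sum A2_nonneg)
  thus ?thesis by (rule has_sum_imp_summable)
qed

lemma PkA: "Pk A ks = (\<Prod>a\<in>Pset. A2 (ks ! a))" unfolding Pk_def by (simp add: A_sq)

lemma hs_case:
  assumes ne: "M ! 0 \<noteq> M ! 1"
  shows "(\<lambda>ks. Pk A ks * Gf ks) summable_on tuples B p"
proof (cases rule: M_cases)
  case (LL a0 a1)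
  have a01: "a0 \<noteq> a1" using LL ne by auto
  have P: "Pset = {..<p} - {a0, a1}" unfolding Pset_def using LL by auto
  have h: "((\<lambda>ks. (\<lambda>(x,y). (norm (br x y))\<^sup>2) (ks ! a0, ks ! a1) * (\<Prod>i\<in>{..<p}-{a0,a1}. A2 (ks ! i))) has_sum (SD * (\<Prod>i\<in>{..<p}-{a0,a1}. SA))) (tuples B p)"
    by (rule has_sum_tuples_pair[OF LL(3,4) a01 SD_has_sum]) (auto simp: SA_has_sum A2_nonneg)
  have "(\<lambda>ks. SA ^ q * ((\<lambda>(x,y). (norm (br x y))\<^sup>2) (ks ! a0, ks ! a1) * (\<Prod>i\<in>{..<p}-{a0,a1}. A2 (ks ! i)))) summable_on tuples B p"
    by (rule summable_on_cmult_right[OF has_sum_imp_summable[OF h]])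
  moreover have "(\<lambda>ks. Pk A ks * Gf ks) = (\<lambda>ks. SA ^ q * ((\<lambda>(x,y). (norm (br x y))\<^sup>2) (ks ! a0, ks ! a1) * (\<Prod>i\<in>{..<p}-{a0,a1}. A2 (ks ! i))))"
    unfolding PkA P using LL by (simp add: Gf_def mult_ac)
  ultimately show ?thesis by simp
next
  case (LR a0 j1)
  have P: "Pset = {..<p} - {a0}" unfolding Pset_def using LR by auto
  have e: "(\<Prod>a<p. A2 (ks ! a)) = A2 (ks ! a0) * (\<Prod>a\<in>{..<p} - {a0}. A2 (ks ! a))" for ks
    by (rule prod.remove) (use LR in auto)
  have "(\<lambda>ks. SA ^ (q - 1) * (\<Prod>a<p. A2 (ks ! a))) summable_on tuples B p"
    by (rule summable_on_cmult_right[OF prodA2_summable])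
  moreover have "(\<lambda>ks. Pk A ks * Gf ks) = (\<lambda>ks. SA ^ (q - 1) * (\<Prod>a<p. A2 (ks ! a)))"
    unfolding PkA P e using LR by (simp add: Gf_def mult_ac)
  ultimately show ?thesis by simp
next
  case (RL j0 a1)
  have P: "Pset = {..<p} - {a1}" unfolding Pset_def using RL by auto
  have e: "(\<Prod>a<p. A2 (ks ! a)) = A2 (ks ! a1) * (\<Prod>a\<in>{..<p} - {a1}. A2 (ks ! a))" for ks
    by (rule prod.remove) (use RL in auto)
  have "(\<lambda>ks. SA ^ (q - 1) * (\<Prod>a<p. A2 (ks ! a))) summable_on tuples B p"
    by (rule summable_on_cmult_right[OF prodA2_summable])
  moreover have "(\<lambda>ks. Pk A ks * Gf ks) = (\<lambda>ks. SA ^ (q - 1) * (\<Prod>a<p. A2 (ks ! a)))"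
    unfolding PkA P e using RL by (simp add: Gf_def mult_ac)
  ultimately show ?thesis by simp
next
  case (RR j0 j1)
  have P: "Pset = {..<p}" unfolding Pset_def using RR by auto
  have "(\<lambda>ks. SD * SA ^ (q - 2) * (\<Prod>a<p. A2 (ks ! a))) summable_on tuples B p"
    by (rule summable_on_cmult_right[OF prodA2_summable])
  moreover have "(\<lambda>ks. Pk A ks * Gf ks) = (\<lambda>ks. SD * SA ^ (q - 2) * (\<Prod>a<p. A2 (ks ! a)))"
    unfolding PkA P using RR by (simp add: Gf_def mult_ac)
  ultimately show ?thesis by simp
qed

end


context pset begin

lemma W_nonneg: "M ! 0 \<noteq> M ! 1 \<Longrightarrow> 0 \<le> Pk wk ks * Gf ks"
  by (rule has_sum_nonneg[OF b2_has_sum]) simp_all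

lemma final:
  "(\<forall>ks. length ks = p \<longrightarrow> Fhat_term br n \<sigma> \<alpha> ks summable_on tuples B q)
   \<and> hilbert_schmidt_multi B p (Fhat B br n \<sigma> \<alpha>)"
proof (cases "M ! 0 = M ! 1")
  case True
  have z: "Fhat_term br n \<sigma> \<alpha> ks hs = 0" if "length ks = p" "hs \<in> tuples B q" for ks hs
    using term_zero[OF True that(1)] that(2) by (simp add: tuples_def)
  have sm: "Fhat_term br n \<sigma> \<alpha> ks summable_on tuples B q" if "length ks = p" for ks
  proof -
    have "(\<lambda>_. 0) summable_on tuples B q" by simp
    thus ?thesis by (rule summable_on_cong[THEN iffD1, rotated]) (simp add: z[OF that])
  qed
  have F0: "Fhat B br n \<sigma> \<alpha> ks = 0" if "length ks = p" for ks
  proof -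
    have "Fhat B br n \<sigma> \<alpha> ks = infsum (\<lambda>_. 0) (tuples B q)"
      unfolding Fhat_def by (rule infsum_cong) (simp add: z[OF that])
    thus ?thesis by simp
  qed
  have lin: "\<forall>ks i. length ks = p \<and> i < p \<longrightarrow> linear (\<lambda>x. Fhat B br n \<sigma> \<alpha> (ks[i := x]))"
    using Fhat_linear[OF sm] by blast
  have bnd: "\<exists>C. \<forall>ks. length ks = p \<longrightarrow> norm (Fhat B br n \<sigma> \<alpha> ks) \<le> C * prod_list (map norm ks)"
    by (rule exI[of _ 0]) (simp add: F0)
  have hsum: "(\<lambda>es. (norm (Fhat B br n \<sigma> \<alpha> es))\<^sup>2) summable_on tuples B p"
  proof -
    have "(\<lambda>_. 0::real) summable_on tuples B p" by simp
    thus ?thesis by (rule summable_on_cong[THEN iffD1, rotated]) (simp add: F0 tuples_def)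
  qed
  show ?thesis using sm lin bnd hsum unfolding hilbert_schmidt_multi_def by blast
next
  case False
  hence ne: "M ! 0 \<noteq> M ! 1" .
  obtain K0 where K0: "\<And>x y. norm (br x y) \<le> norm x * norm y * K0"
    using bounded_bilinear.bounded[OF bb] by blast
  define K where "K = max K0 1"
  have K1: "1 \<le> K" unfolding K_def by simp
  have Kb: "norm (br x y) \<le> norm x * norm y * K" for x y
  proof -
    have "norm x * norm y * K0 \<le> norm x * norm y * K"
      unfolding K_def by (intro mult_left_mono) simp_all
    thus ?thesis using K0[of x y] by linarith
  qed
  have wkB: "norm (br Z k) \<le> (K * norm k) * norm Z" for Z k
    using Kb[of Z k] by (simp add: mult_ac)
  have wkB0: "0 \<le> K * norm k" for k using K1 by simp
  have sm: "Fhat_term br n \<sigma> \<alpha> ks summable_on tuples B q" if "length ks = p" for ks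
    by (rule main_ks(1)[OF ne that wkB wkB0])
  have lin: "\<forall>ks i. length ks = p \<and> i < p \<longrightarrow> linear (\<lambda>x. Fhat B br n \<sigma> \<alpha> (ks[i := x]))"
    using Fhat_linear[OF sm] by blast
  define C0 where "C0 = K ^ (2 * p) * (K\<^sup>2 * SA ^ q + SA ^ q + SD * SA ^ (q - 2))"
  have bnd: "\<exists>C. \<forall>ks. length ks = p \<longrightarrow> norm (Fhat B br n \<sigma> \<alpha> ks) \<le> C * prod_list (map norm ks)"
  proof (intro exI allI impI)
    fix ks :: "'a list" assume ks: "length ks = p"
    let ?P = "\<Prod>a<p. norm (ks ! a)"
    have P0: "0 \<le> ?P" by (intro prod_nonneg) simp
    have PL: "prod_list (map norm ks) = ?P"
      by (simp add: prod.list_conv_set_nth ks lessThan_atLeast0)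
    have nb: "norm (Fhat B br n \<sigma> \<alpha> ks) \<le> sqrt (SA ^ q) * sqrt (Pk (\<lambda>k. K * norm k) ks * Gf ks)"
      by (rule main_ks(2)[OF ne ks wkB wkB0])
    have "sqrt (Pk (\<lambda>k. K * norm k) ks * Gf ks) \<le> sqrt (C0 * (\<Prod>a<p. (norm (ks ! a))\<^sup>2))"
      unfolding C0_def by (rule real_sqrt_le_mono[OF bounded_case[OF ne K1 Kb]])
    also have "(\<Prod>a<p. (norm (ks ! a))\<^sup>2) = ?P\<^sup>2" by (simp add: prod_power_distrib)
    also have "sqrt (C0 * ?P\<^sup>2) = sqrt C0 * ?P" using P0 by (simp add: real_sqrt_mult)
    finally have "sqrt (Pk (\<lambda>k. K * norm k) ks * Gf ks) \<le> sqrt C0 * ?P" .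
    hence "sqrt (SA ^ q) * sqrt (Pk (\<lambda>k. K * norm k) ks * Gf ks) \<le> sqrt (SA ^ q) * (sqrt C0 * ?P)"
      by (rule mult_left_mono) (simp add: SA_nonneg)
    with nb have "norm (Fhat B br n \<sigma> \<alpha> ks) \<le> sqrt (SA ^ q) * (sqrt C0 * ?P)" by linarith
    thus "norm (Fhat B br n \<sigma> \<alpha> ks) \<le> (sqrt (SA ^ q) * sqrt C0) * prod_list (map norm ks)"
      unfolding PL by (simp add: mult_ac)
  qed
  have hsum: "(\<lambda>es. (norm (Fhat B br n \<sigma> \<alpha> es))\<^sup>2) summable_on tuples B p"
  proof (rule summable_on_comparison_test)
    show "(\<lambda>ks. SA ^ q * (Pk A ks * Gf ks)) summable_on tuples B p"
      by (rule summable_on_cmult_right[OF hs_case[OF ne]])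
    fix ks assume ks: "ks \<in> tuples B p"
    have kl: "length ks = p" and kB: "\<And>a. a < p \<Longrightarrow> ks ! a \<in> B"
      using ks unfolding tuples_def by auto
    have wA: "norm (br Z (ks ! a)) \<le> A (ks ! a) * norm Z" if "a < p" for a Z
      by (rule A_bound[OF kB[OF that]])
    have "norm (Fhat B br n \<sigma> \<alpha> ks) \<le> sqrt (SA ^ q) * sqrt (Pk A ks * Gf ks)"
      by (rule main_ks(2)[OF ne kl wA A_nonneg])
    moreover have "0 \<le> norm (Fhat B br n \<sigma> \<alpha> ks)" by simp
    ultimately have "(norm (Fhat B br n \<sigma> \<alpha> ks))\<^sup>2 \<le> (sqrt (SA ^ q) * sqrt (Pk A ks * Gf ks))\<^sup>2"
      by (intro power_mono)
    also have "\<dots> = SA ^ q * (Pk A ks * Gf ks)"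
      using W_nonneg[OF ne] SA_nonneg by (simp add: power_mult_distrib)
    finally show "(norm (Fhat B br n \<sigma> \<alpha> ks))\<^sup>2 \<le> SA ^ q * (Pk A ks * Gf ks)" .
  qed simp
  show ?thesis using sm lin bnd hsum unfolding hilbert_schmidt_multi_def by blast
qed

end

theorem proposition4p1:
  fixes B :: "'a::{real_inner,complete_space} set"
    and br :: "'a \<Rightarrow> 'a \<Rightarrow> 'a"
    and r n :: nat and \<sigma> :: "nat \<Rightarrow> nat" and \<alpha> :: "nat list"
  assumes "countable B" and "orthonormal_basis B"
    and "hs_nilpotent_lie B br r"
    and "n \<in> {2..r}"
    and "\<sigma> permutes {..<n}"
    and "\<alpha> \<in> Jn n"
  shows "(\<forall>ks. length ks = p_of \<alpha> \<longrightarrow>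
            Fhat_term br n \<sigma> \<alpha> ks summable_on tuples B (q_of \<alpha>))
       \<and> hilbert_schmidt_multi B (p_of \<alpha>) (Fhat B br n \<sigma> \<alpha>)"
proof -
  have \<alpha>: "set \<alpha> \<subseteq> {1,2}" "sum_list \<alpha> = n"
    using assms(6) unfolding Jn_def J_def by auto
  have n2: "2 \<le> n" using assms(4) by simp
  interpret pset B br r n \<sigma> \<alpha>
    by (unfold_locales) (use assms(2,3,5) \<alpha> n2 in auto)
  show ?thesis by (rule final)
qed


end
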